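(* Let $\varphi:\mathfrak{h}\to V^*$ be a complex factorization structure of dimension $m$ and $j\in\{1,\ldots,m\}$. The factorization curve $\psi_j$ is decomposable if and only if there exist a subset $S\subset\{1,\ldots,m\}$ of cardinality $\deg\psi_j$, a 1-dimensional subspace $\Gamma_j\subset\bigotimes_{r\notin S}V_r^*$, and for each $r\in S$ an invertible projective transformation $g_r:\mathbb{P}(V_j^* )\to\mathbb{P}(V_r^* )$, such that for every $\ell\in\mathbb{P}(V_j)$ the line $\varphi(\psi_j(\ell))\subset V^*$ is spanned by the tensor having (a spanning vector of) $g_r\ell^0$ in the $r$-th slot for each $r\in S$ and (a spanning tensor of) $\Gamma_j$ in the remaining slots. In this case $j\in S$ and $g_j=\mathrm{id}$.
   Context: $V_1,\ldots,V_m$ are 2-dimensional complex vector spaces, $V^*=V_1^*\otimes\cdots\otimes V_m^*$; $\ell^0\subset V_j^*$ is the annihilator of $\ell\in\mathbb{P}(V_j)$; $\mathbb{P}(W)$ carries the Zariski topology and "generic" means on a nonempty Zariski-open subset. $\Sigma^0_{j,\ell}=V_1^*\otimes\cdots\otimes\ell^0\otimes\cdots\otimes V_m^*$ ($\ell^0$ in slot $j$). A factorization structure of dimension $m$ is an injective linear map $\varphi:\mathfrak{h}\to V^*$, $\dim\mathfrak{h}=m+1$, with $\dim(\varphi(\mathfrak{h})\cap\Sigma^0_{j,\ell})=1$ for all $j$ and generic $\ell$. The $j$-th factorization curve $\psi_j:\mathbb{P}(V_j)\to\mathbb{P}(\mathfrak{h})$ is the unique regular extension of the generically defined regular map $\ell\mapsto\varphi^{-1}(\varphi(\mathfrak{h})\cap\Sigma^0_{j,\ell})$;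 $\deg\psi_j$ is the integer $e$ with $\psi_j^*\mathcal{O}_{\mathfrak{h}}(1)\cong\mathcal{O}_{V_j}(e)$. Curves $\psi_i,\psi_j$ are equivalent if they have the same image; $\psi_j$ is decomposable if its equivalence class in $\{\psi_1,\ldots,\psi_m\}$ has exactly $\deg\psi_j$ elements. *)

theory Defs
  imports Complex_Main
begin

text \<open>Each V_r (r = 1..m) is identified with C^2 = bool => complex, and so is
 V_r^*; the pairing of alpha in V_r^* with v in V_r is alpha True * v True + alpha False * v False.
 A tensor in V^* = V_1^* (x) ... (x) V_m^* is a function on multi-indices (nat => bool) => complex
 (only slots 1..m matter).  The space h (dim m+1) is {x :: nat => complex. x i = 0 for i > m}.
 Points of a projective space are represented by nonzero vectors.\<close>

definition cline :: "('a \<Rightarrow> complex) \<Rightarrow> ('a \<Rightarrow> complex) set" where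
  "cline x = range (\<lambda>c. (\<lambda>i. c * x i))"

definition is_line :: "('a \<Rightarrow> complex) set \<Rightarrow> bool" where
  "is_line S \<longleftrightarrow> (\<exists>x. x \<noteq> (\<lambda>_. 0) \<and> S = cline x)"

definition clin_span :: "('a \<Rightarrow> complex) set \<Rightarrow> ('a \<Rightarrow> complex) set" where
  "clin_span A = {f. \<exists>(n::nat) c w. (\<forall>i<n. w i \<in> A) \<and> f = (\<lambda>x. \<Sum>i<n. c i * w i x)}"

definition pure_tensor :: "nat set \<Rightarrow> (nat \<Rightarrow> bool \<Rightarrow> complex) \<Rightarrow> (nat \<Rightarrow> bool) \<Rightarrow> complex" where
  "pure_tensor I a = (\<lambda>x. \<Prod>r\<in>I. a r (x r))"

definition tensor_space :: "nat set \<Rightarrow> ((nat \<Rightarrow> bool) \<Rightarrow> complex) set" where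
  "tensor_space I = clin_span {pure_tensor I a | a. True}"

definition ann :: "(bool \<Rightarrow> complex) \<Rightarrow> (bool \<Rightarrow> complex) set" where
  "ann v = {\<alpha>. \<alpha> True * v True + \<alpha> False * v False = 0}"

definition Sigma0 :: "nat \<Rightarrow> nat \<Rightarrow> (bool \<Rightarrow> complex) \<Rightarrow> ((nat \<Rightarrow> bool) \<Rightarrow> complex) set" where
  "Sigma0 m j v = clin_span {pure_tensor {1..m} a | a. a j \<in> ann v}"

definition hspace :: "nat \<Rightarrow> (nat \<Rightarrow> complex) set" where
  "hspace m = {x. \<forall>i. m < i \<longrightarrow> x i = 0}"

definition bform :: "nat \<Rightarrow> (nat \<Rightarrow> complex) \<Rightarrow> (bool \<Rightarrow> complex) \<Rightarrow> complex" where
  "bform d c v = (\<Sum>k\<le>d. c k * v True ^ k * v False ^ (d - k))"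

definition zariski_open_P1 :: "(bool \<Rightarrow> complex) set \<Rightarrow> bool" where
  "zariski_open_P1 U \<longleftrightarrow> (\<exists>F :: (nat \<times> (nat \<Rightarrow> complex)) set.
      U = {v. v \<noteq> (\<lambda>_. 0) \<and> \<not> (\<forall>(d, c)\<in>F. bform d c v = 0)})"

definition generic_P1 :: "((bool \<Rightarrow> complex) \<Rightarrow> bool) \<Rightarrow> bool" where
  "generic_P1 P \<longleftrightarrow> (\<exists>U. zariski_open_P1 U \<and> U \<noteq> {} \<and> (\<forall>v\<in>U. P v))"

definition factorization_structure ::
  "nat \<Rightarrow> ((nat \<Rightarrow> complex) \<Rightarrow> ((nat \<Rightarrow> bool) \<Rightarrow> complex)) \<Rightarrow> bool" where
  "factorization_structure m \<phi> \<longleftrightarrow>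
     (\<forall>x\<in>hspace m. \<forall>y\<in>hspace m. \<phi> (\<lambda>i. x i + y i) = (\<lambda>t. \<phi> x t + \<phi> y t)) \<and>
     (\<forall>x\<in>hspace m. \<forall>c. \<phi> (\<lambda>i. c * x i) = (\<lambda>t. c * \<phi> x t)) \<and>
     inj_on \<phi> (hspace m) \<and>
     \<phi> ` hspace m \<subseteq> tensor_space {1..m} \<and>
     (\<forall>j\<in>{1..m}. generic_P1 (\<lambda>v. is_line (\<phi> ` hspace m \<inter> Sigma0 m j v)))"

definition psi_of :: "nat \<Rightarrow> nat \<Rightarrow> (nat \<Rightarrow> nat \<Rightarrow> complex) \<Rightarrow> (bool \<Rightarrow> complex) \<Rightarrow> nat \<Rightarrow> complex" where
  "psi_of m e F v = (\<lambda>i. if i \<le> m then bform e (F i) v else 0)"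

text \<open>(e, F) represents the j-th factorization curve psi_j: the forms have no common zero
 (so psi_of is a regular map P^1 -> P(h) with psi^* O(1) = O(e)), and it agrees generically
 with l |-> phi^{-1}(phi(h) \<inter> Sigma^0_{j,l}).  Then deg psi_j = e.\<close>
definition fcurve :: "nat \<Rightarrow> ((nat \<Rightarrow> complex) \<Rightarrow> ((nat \<Rightarrow> bool) \<Rightarrow> complex)) \<Rightarrow> nat \<Rightarrow> nat
     \<Rightarrow> (nat \<Rightarrow> nat \<Rightarrow> complex) \<Rightarrow> bool" where
  "fcurve m \<phi> j e F \<longleftrightarrow>
     (\<forall>v. v \<noteq> (\<lambda>_. 0) \<longrightarrow> (\<exists>i\<le>m. bform e (F i) v \<noteq> 0)) \<and>
     generic_P1 (\<lambda>v. {x \<in> hspace m. \<phi> x \<in> Sigma0 m j v} = cline (psi_of m e F v))"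

definition curve_image :: "nat \<Rightarrow> nat \<Rightarrow> (nat \<Rightarrow> nat \<Rightarrow> complex) \<Rightarrow> (nat \<Rightarrow> complex) set set" where
  "curve_image m e F = {cline (psi_of m e F v) | v. v \<noteq> (\<lambda>_. 0)}"

text \<open>psi_j decomposable: its equivalence class (same image) among psi_1..psi_m has deg psi_j elements\<close>
definition decomposable :: "nat \<Rightarrow> (nat \<Rightarrow> nat) \<Rightarrow> (nat \<Rightarrow> nat \<Rightarrow> nat \<Rightarrow> complex) \<Rightarrow> nat \<Rightarrow> bool" where
  "decomposable m e F j \<longleftrightarrow>
     card {i \<in> {1..m}. curve_image m (e i) (F i) = curve_image m (e j) (F j)} = e j"

definition app2 :: "(bool \<Rightarrow> bool \<Rightarrow> complex) \<Rightarrow> (bool \<Rightarrow> complex) \<Rightarrow> bool \<Rightarrow> complex" where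
  "app2 M \<alpha> = (\<lambda>b. M b True * \<alpha> True + M b False * \<alpha> False)"

definition invertible2 :: "(bool \<Rightarrow> bool \<Rightarrow> complex) \<Rightarrow> bool" where
  "invertible2 M \<longleftrightarrow> (\<exists>N. \<forall>\<alpha>. app2 N (app2 M \<alpha>) = \<alpha> \<and> app2 M (app2 N \<alpha>) = \<alpha>)"

definition proj_identity :: "(bool \<Rightarrow> bool \<Rightarrow> complex) \<Rightarrow> bool" where
  "proj_identity M \<longleftrightarrow> (\<exists>c. c \<noteq> 0 \<and> (\<forall>\<alpha>. app2 M \<alpha> = (\<lambda>b. c * \<alpha> b)))"

text \<open>the data (S, g_r = [M r], Gamma_j = span gamma) of the decomposition statement\<close>
definition decomposition_data ::
  "nat \<Rightarrow> ((nat \<Rightarrow> complex) \<Rightarrow> ((nat \<Rightarrow> bool) \<Rightarrow> complex)) \<Rightarrow> (nat \<Rightarrow> nat) \<Rightarrow> (nat \<Rightarrow> nat \<Rightarrow> nat \<Rightarrow> complex)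
   \<Rightarrow> nat \<Rightarrow> nat set \<Rightarrow> (nat \<Rightarrow> bool \<Rightarrow> bool \<Rightarrow> complex) \<Rightarrow> ((nat \<Rightarrow> bool) \<Rightarrow> complex) \<Rightarrow> bool" where
  "decomposition_data m \<phi> e F j S M \<gamma> \<longleftrightarrow>
     S \<subseteq> {1..m} \<and> card S = e j \<and>
     \<gamma> \<noteq> (\<lambda>_. 0) \<and> \<gamma> \<in> tensor_space ({1..m} - S) \<and>
     (\<forall>r\<in>S. invertible2 (M r)) \<and>
     (\<forall>v \<alpha>. v \<noteq> (\<lambda>_. 0) \<longrightarrow> \<alpha> \<noteq> (\<lambda>_. 0) \<longrightarrow> \<alpha> \<in> ann v \<longrightarrow>
        cline (\<phi> (psi_of m (e j) (F j) v)) =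
        cline (\<lambda>x. \<gamma> x * (\<Prod>r\<in>S. app2 (M r) \<alpha> (x r))))"

end

theory Submission
  imports Defs "HOL-Computational_Algebra.Polynomial_Factorial" "HOL-Computational_Algebra.Field_as_Ring"
begin

definition hom :: "nat \<Rightarrow> complex poly \<Rightarrow> (bool \<Rightarrow> complex) \<Rightarrow> complex" where
  "hom N p v = bform N (coeff p) v"

lemma hom_add: "hom N (p + q) v = hom N p v + hom N q v"
  by (simp add: hom_def bform_def algebra_simps sum.distrib)

lemma hom_smult: "hom N (smult a p) v = a * hom N p v"
  by (simp add: hom_def bform_def sum_distrib_left algebra_simps)

lemma hom_diff: "hom N (p - q) v = hom N p v - hom N q v"
  by (simp add: hom_def bform_def algebra_simps sum_subtractf)

lemma hom_0[simp]: "hom N 0 v = 0"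
  by (simp add: hom_def bform_def)

lemma hom_const0: "hom 0 p v = coeff p 0"
  by (simp add: hom_def bform_def)

lemma hom_lin: "hom 1 p v = coeff p 0 * v False + coeff p 1 * v True"
  by (simp add: hom_def bform_def)

lemma hom_chart_gen:
  assumes "degree p \<le> N" "v False \<noteq> 0"
  shows "hom N p v = v False ^ N * poly p (v True / v False)"
proof -
  have "poly p (v True / v False) = (\<Sum>i\<le>N. coeff p i * (v True / v False) ^ i)"
    unfolding poly_altdef
    by (rule sum.mono_neutral_left) (use assms le_degree in auto)
  then have "v False ^ N * poly p (v True / v False) =
      (\<Sum>i\<le>N. coeff p i * v True ^ i * (v False ^ N / v False ^ i))"
    by (simp add: sum_distrib_left power_divide algebra_simps)
  also have "\<dots> = (\<Sum>i\<le>N. coeff p i * v True ^ i * v False ^ (N - i))"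
    by (rule sum.cong) (use assms in \<open>auto simp: power_diff\<close>)
  finally show ?thesis by (simp add: hom_def bform_def)
qed

lemma hom_chart:
  assumes "degree p \<le> N"
  shows "hom N p (\<lambda>b. if b then t else 1) = poly p t"
  using hom_chart_gen[OF assms, of "\<lambda>b. if b then t else 1"] by simp

lemma hom_inf:
  assumes "v False = 0"
  shows "hom N p v = coeff p N * v True ^ N"
proof -
  have "hom N p v = (\<Sum>k\<le>N. if k = N then coeff p N * v True ^ N else 0)"
    unfolding hom_def bform_def by (rule sum.cong) (use assms in auto)
  then show ?thesis by simp
qed

lemma hom_mult:
  assumes "degree p \<le> N1" "degree q \<le> N2"
  shows "hom (N1 + N2) (p * q) v = hom N1 p v * hom N2 q v"
proof (cases "v False = 0")
  case True
  have "coeff (p * q) (N1 + N2) = coeff p N1 * coeff q N2"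
  proof (cases "degree p = N1 \<and> degree q = N2")
    case True then show ?thesis using coeff_mult_degree_sum[of p q] by simp
  next
    case False
    then have "degree p < N1 \<or> degree q < N2" using assms by auto
    moreover have "degree (p*q) \<le> degree p + degree q" by (rule degree_mult_le)
    ultimately show ?thesis using assms by (auto simp: coeff_eq_0)
  qed
  then show ?thesis using True by (simp add: hom_inf power_add)
next
  case False
  have "degree (p*q) \<le> N1 + N2" using assms degree_mult_le[of p q] by linarith
  then show ?thesis using False assms by (simp add: hom_chart_gen power_add)
qed

lemma hom_eq0_iff:
  assumes "degree p \<le> N"
  shows "(\<forall>v. hom N p v = 0) \<longleftrightarrow> p = 0"
proof
  assume "\<forall>v. hom N p v = 0"
  then have "\<forall>t. poly p t = 0" using hom_chart[OF assms] by metis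
  then show "p = 0" using poly_all_0_iff_0 by blast
qed simp

definition Pc :: "nat \<Rightarrow> (nat \<Rightarrow> complex) \<Rightarrow> complex poly" where
  "Pc N c = (\<Sum>k\<le>N. monom (c k) k)"

lemma coeff_Pc: "coeff (Pc N c) i = (if i \<le> N then c i else 0)"
  by (simp add: Pc_def coeff_sum)

lemma degree_Pc: "degree (Pc N c) \<le> N"
  by (rule degree_le) (simp add: coeff_Pc)

lemma hom_Pc: "hom N (Pc N c) v = bform N c v"
  by (simp add: hom_def bform_def coeff_Pc)

lemma vanish_basic:
  assumes "degree G \<le> N" "degree F0 \<le> N'" "F0 \<noteq> 0"
    and "\<And>v. v \<noteq> (\<lambda>_. 0) \<Longrightarrow> hom N' F0 v \<noteq> 0 \<Longrightarrow> hom N G v = 0"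
  shows "G = 0"
proof -
  have "poly (G * F0) t = 0" for t
  proof -
    let ?v = "\<lambda>b::bool. if b then t else (1::complex)"
    have nz: "?v \<noteq> (\<lambda>_. 0)" by (metis one_neq_zero)
    have "hom N G ?v * hom N' F0 ?v = 0" using assms(4)[OF nz] by auto
    then show ?thesis using hom_chart assms(1,2) by simp
  qed
  then have "G * F0 = 0" using poly_all_0_iff_0 by blast
  then show ?thesis using assms(3) by simp
qed

lemma zariski_witness:
  assumes "zariski_open_P1 U" "U \<noteq> {}"
  shows "\<exists>N' F0. F0 \<noteq> 0 \<and> degree F0 \<le> N' \<and> (\<forall>u. u \<noteq> (\<lambda>_. 0) \<longrightarrow> hom N' F0 u \<noteq> 0 \<longrightarrow> u \<in> U)"
proof -
  obtain FF where U: "U = {v. v \<noteq> (\<lambda>_. 0) \<and> \<not> (\<forall>(d, c)\<in>FF. bform d c v = 0)}"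
    using assms(1) unfolding zariski_open_P1_def by blast
  obtain u0 where "u0 \<in> U" using assms(2) by blast
  then obtain d0 c0 where dc: "(d0, c0) \<in> FF" "bform d0 c0 u0 \<noteq> 0" using U by auto
  have "Pc d0 c0 \<noteq> 0" using dc(2) hom_Pc[of d0 c0 u0] by auto
  moreover have "\<forall>u. u \<noteq> (\<lambda>_. 0) \<longrightarrow> hom d0 (Pc d0 c0) u \<noteq> 0 \<longrightarrow> u \<in> U"
    using U dc(1) hom_Pc by fastforce
  ultimately show ?thesis using degree_Pc by blast
qed

lemma vanish_zariski:
  assumes "zariski_open_P1 U" "U \<noteq> {}" "degree G \<le> N" "\<forall>v\<in>U. hom N G v = 0"
  shows "G = 0"
proof -
  obtain N' F0 where F0: "F0 \<noteq> 0" "degree F0 \<le> N'"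
    "\<forall>u. u \<noteq> (\<lambda>_. 0) \<longrightarrow> hom N' F0 u \<noteq> 0 \<longrightarrow> u \<in> U"
    using zariski_witness[OF assms(1,2)] by blast
  show ?thesis by (rule vanish_basic[OF assms(3) F0(2,1)]) (use F0(3) assms(4) in blast)
qed



definition dep :: "nat set \<Rightarrow> ((nat \<Rightarrow> bool) \<Rightarrow> complex) \<Rightarrow> bool" where
  "dep I t \<longleftrightarrow> (\<forall>x y. (\<forall>i\<in>I. x i = y i) \<longrightarrow> t x = t y)"

definition contr :: "nat \<Rightarrow> (bool \<Rightarrow> complex) \<Rightarrow> ((nat \<Rightarrow> bool) \<Rightarrow> complex) \<Rightarrow> (nat \<Rightarrow> bool) \<Rightarrow> complex" where
  "contr r u t x = u True * t (x(r:=True)) + u False * t (x(r:=False))"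

lemma dep_pure: "dep I (pure_tensor I a)"
  unfolding dep_def pure_tensor_def by (intro allI impI prod.cong refl) auto

lemma clin_span_elim:
  assumes "f \<in> clin_span A"
  shows "\<exists>(n::nat) c w. (\<forall>i<n. w i \<in> A) \<and> (\<forall>x. f x = (\<Sum>i<n. c i * w i x))"
  using assms unfolding clin_span_def mem_Collect_eq
  apply (elim exE conjE)
  subgoal for n c w by (rule exI[where x=n], rule exI[where x=c], rule exI[where x=w]) simp
  done

lemma setof_elim: "x \<in> {g a | a. True} \<Longrightarrow> (\<And>a. x = g a \<Longrightarrow> thesis) \<Longrightarrow> thesis"
  by auto

lemma tensor_space_dep:
  assumes "t \<in> tensor_space I" shows "dep I t"
proof -
  obtain n :: nat and c w where w: "\<forall>i<n. w i \<in> {pure_tensor I a | a. True}"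
    and t: "\<forall>x. t x = (\<Sum>i<n. c i * w i x)"
    using clin_span_elim[OF assms[unfolded tensor_space_def]] by blast
  show ?thesis unfolding dep_def
  proof (intro allI impI)
    fix x y :: "nat \<Rightarrow> bool" assume xy: "\<forall>i\<in>I. x i = y i"
    have "w i x = w i y" if iN: "i < n" for i
    proof -
      have "w i \<in> {pure_tensor I a | a. True}" using w iN by blast
      then obtain a where a: "w i = pure_tensor I a" by blast
      have "pure_tensor I a x = pure_tensor I a y" using dep_pure[of I a] xy unfolding dep_def by blast
      then show ?thesis using a by simp
    qed
    then show "t x = t y" using t by (auto intro!: sum.cong)
  qed
qed

lemma dep_span:
  assumes "finite I" "dep I t"
  shows "\<exists>(n::nat) c a. t = (\<lambda>x. \<Sum>i<n. c i * pure_tensor I (a i) x)"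
proof -
  define Y where "Y = {y::nat\<Rightarrow>bool. \<forall>i. i \<notin> I \<longrightarrow> \<not> y i}"
  have "Y \<subseteq> (\<lambda>B i. i \<in> B) ` Pow I" unfolding Y_def
  proof
    fix y assume "y \<in> {y::nat\<Rightarrow>bool. \<forall>i. i \<notin> I \<longrightarrow> \<not> y i}"
    then have "y = (\<lambda>i. i \<in> {i. y i})" "{i. y i} \<in> Pow I" by auto
    then show "y \<in> (\<lambda>B i. i \<in> B) ` Pow I" by blast
  qed
  then have fY: "finite Y" using assms(1) finite_subset by blast
  define \<delta> where "\<delta> y = pure_tensor I (\<lambda>r b. if b = y r then 1 else (0::complex))" for y
  have \<delta>: "\<delta> y x = (if \<forall>r\<in>I. x r = y r then 1 else 0)" for y x
    unfolding \<delta>_def pure_tensor_def using assms(1) by (auto simp: prod_zero_iff)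
  have rep: "t x = (\<Sum>y\<in>Y. t y * \<delta> y x)" for x
  proof -
    define y0 where "y0 = (\<lambda>i. i \<in> I \<and> x i)"
    have y0Y: "y0 \<in> Y" unfolding Y_def y0_def by auto
    have "(\<Sum>y\<in>Y. t y * \<delta> y x) = (\<Sum>y\<in>Y. if y = y0 then t y0 else 0)"
    proof (rule sum.cong)
      fix y assume "y \<in> Y"
      then have "(\<forall>r\<in>I. x r = y r) \<longleftrightarrow> y = y0" unfolding Y_def y0_def by (auto simp: fun_eq_iff)
      then show "t y * \<delta> y x = (if y = y0 then t y0 else 0)" by (simp add: \<delta>)
    qed simp
    also have "\<dots> = t y0" using fY y0Y by simp
    also have "t y0 = t x" using assms(2) unfolding dep_def y0_def by auto
    finally show ?thesis by simp
  qed
  obtain h where h: "bij_betw h {0..<card Y} Y" using ex_bij_betw_nat_finite[OF fY] by blast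
  have "t x = (\<Sum>i<card Y. t (h i) * pure_tensor I (\<lambda>r b. if b = h i r then 1 else 0) x)" for x
  proof -
    have "(\<Sum>y\<in>Y. t y * \<delta> y x) = (\<Sum>i\<in>{0..<card Y}. t (h i) * \<delta> (h i) x)"
      using sum.reindex_bij_betw[OF h, of "\<lambda>y. t y * \<delta> y x"] by simp
    then show ?thesis unfolding rep[of x] by (simp add: atLeast0LessThan \<delta>_def)
  qed
  then have "t = (\<lambda>x. \<Sum>i<card Y. t (h i) * pure_tensor I (\<lambda>r b. if b = h i r then 1 else 0) x)"
    by (rule ext)
  then show ?thesis
    by (intro exI[where x="card Y"] exI[where x="\<lambda>i. t (h i)"]
          exI[where x="\<lambda>i r b. if b = h i r then 1 else 0"])
qed

lemma span_in_clin_span: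
  assumes "\<forall>i<n. w i \<in> A"
  shows "(\<lambda>x. \<Sum>i<(n::nat). c i * w i x) \<in> clin_span A"
  unfolding clin_span_def mem_Collect_eq using assms
  by (intro exI[where x=n] exI[where x=c] exI[where x=w]) simp

lemma dep_tensor_space:
  assumes "finite I" "dep I t"
  shows "t \<in> tensor_space I"
proof -
  obtain n :: nat and c a where t: "t = (\<lambda>x. \<Sum>i<n. c i * pure_tensor I (a i) x)"
    using dep_span[OF assms] by blast
  show ?thesis unfolding tensor_space_def t
    by (rule span_in_clin_span) auto
qed

lemma pure_split:
  assumes "finite I" "r \<in> I"
  shows "pure_tensor I a x = a r (x r) * (\<Prod>i\<in>I-{r}. a i (x i))"
  unfolding pure_tensor_def using assms by (simp add: prod.remove)

lemma Sigma0_contr: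
  assumes "r \<in> {1..m}" "t \<in> Sigma0 m r u"
  shows "contr r u t x = 0"
proof -
  obtain n :: nat and c w where w: "\<forall>i<n. w i \<in> {pure_tensor {1..m} a | a. a r \<in> ann u}"
    and t: "\<forall>x. t x = (\<Sum>i<n. c i * w i x)"
    using clin_span_elim[OF assms(2)[unfolded Sigma0_def]] by blast
  have "contr r u (w i) x = 0" if iN: "i < n" for i
  proof -
    have "w i \<in> {pure_tensor {1..m} a | a. a r \<in> ann u}" using w iN by blast
    then obtain a where a: "w i = pure_tensor {1..m} a" "a r \<in> ann u" by blast
    have eq: "(\<Prod>k\<in>{1..m}-{r}. a k ((x(r:=b)) k)) = (\<Prod>k\<in>{1..m}-{r}. a k (x k))" for b
      by (rule prod.cong) auto
    have "contr r u (w i) x = (a r True * u True + a r False * u False) * (\<Prod>k\<in>{1..m}-{r}. a k (x k))"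
      using a assms(1) unfolding contr_def by (simp add: pure_split eq algebra_simps)
    then show ?thesis using a(2) by (simp add: ann_def)
  qed
  have "contr r u t x = (\<Sum>i<n. c i * contr r u (w i) x)"
    by (simp add: t contr_def sum_distrib_left sum.distrib algebra_simps)
  also have "\<dots> = 0" using \<open>\<And>i. i < n \<Longrightarrow> contr r u (w i) x = 0\<close> by simp
  finally show ?thesis .
qed


lemma nonzero_fun_bool:
  assumes "u \<noteq> (\<lambda>_. 0)" "u True = 0" shows "u False \<noteq> (0::complex)"
proof
  assume a: "u False = 0"
  have "u = (\<lambda>_. 0)"
  proof
    fix b show "u b = 0" using a assms(2) by (cases b) simp_all
  qed
  then show False using assms(1) by simp
qed

lemma contr_Sigma0:
  assumes r: "r \<in> {1..m}" and dp: "dep {1..m} t" and c: "\<forall>x. contr r u t x = 0"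
  shows "t \<in> Sigma0 m r u"
proof (cases "u = (\<lambda>_. 0)")
  case True
  then have annU: "ann u = UNIV" by (simp add: ann_def)
  obtain n :: nat and cc a where t: "t = (\<lambda>x. \<Sum>i<n. cc i * pure_tensor {1..m} (a i) x)"
    using dep_span[OF finite_atLeastAtMost dp] by (elim exE) (rule that, assumption)
  show ?thesis unfolding Sigma0_def t annU by (rule span_in_clin_span) auto
next
  case False
  define \<alpha> where "\<alpha> = (\<lambda>b. if b then u False else - u True)"
  have \<alpha>ann: "\<alpha> \<in> ann u" by (simp add: ann_def \<alpha>_def algebra_simps)
  define s where "s = (\<lambda>x. if u True \<noteq> 0 then - t (x(r:=False)) / u True else t (x(r:=True)) / u False)"
  have ts: "t x = \<alpha> (x r) * s x" for x
  proof -
    have cx: "u True * t (x(r:=True)) + u False * t (x(r:=False)) = 0" using c unfolding contr_def by auto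

    show ?thesis
    proof (cases "x r")
      case True
      then have "x(r:=True) = x" by (simp add: fun_upd_idem_iff)
      then have "t x = t (x(r:=True))" by simp
      then show ?thesis using True cx nonzero_fun_bool[OF False] unfolding \<alpha>_def s_def
        by (auto simp: field_simps) (metis add_eq_0_iff mult.commute)
    next
      case F: False
      then have "x(r:=False) = x" by (simp add: fun_upd_idem_iff)
      then have "t x = t (x(r:=False))" by simp
      then show ?thesis using F cx nonzero_fun_bool[OF False] unfolding \<alpha>_def s_def
        by (auto simp: field_simps)
    qed
  qed
  have sdep: "dep ({1..m} - {r}) s"
  proof -
    have "t (x(r:=b)) = t (y(r:=b))" if "\<forall>i\<in>{1..m} - {r}. x i = y i" for x y b
      using dp that unfolding dep_def by auto
    then show ?thesis unfolding dep_def s_def by simp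
  qed
  obtain n :: nat and cc a where sexp: "s = (\<lambda>x. \<Sum>i<n. cc i * pure_tensor ({1..m} - {r}) (a i) x)"
    using dep_span[OF finite_Diff[OF finite_atLeastAtMost] sdep] by (elim exE) (rule that, assumption)
  have pt: "\<alpha> (x r) * pure_tensor ({1..m} - {r}) (a i) x = pure_tensor {1..m} ((a i)(r:=\<alpha>)) x" for i x
  proof -
    have "(\<Prod>k\<in>{1..m}-{r}. ((a i)(r:=\<alpha>)) k (x k)) = pure_tensor ({1..m} - {r}) (a i) x"
      unfolding pure_tensor_def by (rule prod.cong) auto
    then show ?thesis using pure_split[of "{1..m}" r "(a i)(r:=\<alpha>)" x] r by simp
  qed
  have "t = (\<lambda>x. \<Sum>i<n. cc i * pure_tensor {1..m} ((a i)(r:=\<alpha>)) x)"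
  proof (rule ext)
    fix x
    have "t x = (\<Sum>i<n. cc i * (\<alpha> (x r) * pure_tensor ({1..m} - {r}) (a i) x))"
      unfolding ts sexp by (simp add: sum_distrib_left algebra_simps)
    then show "t x = (\<Sum>i<n. cc i * pure_tensor {1..m} ((a i)(r:=\<alpha>)) x)" unfolding pt by simp
  qed
  then show ?thesis unfolding Sigma0_def
    by (simp only:) (rule span_in_clin_span, use \<alpha>ann in auto)
qed



lemma hom_lin': "hom (Suc 0) p v = coeff p 0 * v False + coeff p 1 * v True"
  by (simp add: hom_def bform_def)

lemma hom_sum: "finite A \<Longrightarrow> hom N (\<Sum>i\<in>A. f i) v = (\<Sum>i\<in>A. hom N (f i) v)"
  by (induction A rule: finite_induct) (simp_all add: hom_add)

lemma cline_self: "x \<in> cline x"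
  unfolding cline_def by (rule range_eqI[where x=1]) simp

lemma cline_eq_scale:
  assumes "cline a = cline b" shows "\<exists>c. a = (\<lambda>i. c * b i)"
  using cline_self[of a] assms unfolding cline_def by auto

lemma cline_scale:
  assumes "c \<noteq> 0" shows "cline (\<lambda>i. c * x i) = cline x"
proof
  show "cline (\<lambda>i. c * x i) \<subseteq> cline x" unfolding cline_def
  proof
    fix y assume "y \<in> range (\<lambda>d i. d * (c * x i))"
    then obtain d where "y = (\<lambda>i. d * (c * x i))" by blast
    then have "y = (\<lambda>i. (d * c) * x i)" by (simp add: algebra_simps)
    then show "y \<in> range (\<lambda>d i. d * x i)" by blast
  qed
  show "cline x \<subseteq> cline (\<lambda>i. c * x i)" unfolding cline_def
  proof
    fix y assume "y \<in> range (\<lambda>d i. d * x i)"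
    then obtain d where "y = (\<lambda>i. d * x i)" by blast
    then have "y = (\<lambda>i. (d / c) * (c * x i))" using assms by (simp add: fun_eq_iff)
    then show "y \<in> range (\<lambda>d i. d * (c * x i))" by blast
  qed
qed

lemma cline_prop:
  fixes x y :: "'a \<Rightarrow> complex"
  assumes "y \<noteq> (\<lambda>_. 0)" "x \<noteq> (\<lambda>_. 0)" "\<forall>i k. x i * y k = x k * y i"
  shows "cline x = cline y"
proof -
  obtain k where k: "y k \<noteq> 0" using assms(1) by auto
  define c where "c = x k / y k"
  have xc: "x = (\<lambda>i. c * y i)"
  proof
    fix i show "x i = c * y i" using assms(3)[rule_format, of i k] k unfolding c_def
      by (simp add: field_simps)
  qed
  have "c \<noteq> 0"
  proof
    assume "c = 0" then have "x = (\<lambda>_. 0)" using xc by simp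
    then show False using assms(2) by simp
  qed
  then show ?thesis using xc cline_scale by simp
qed

context
  fixes m :: nat and \<phi> :: "(nat \<Rightarrow> complex) \<Rightarrow> ((nat \<Rightarrow> bool) \<Rightarrow> complex)"
  assumes fs: "factorization_structure m \<phi>"
begin

lemma phi_add: "x \<in> hspace m \<Longrightarrow> y \<in> hspace m \<Longrightarrow> \<phi> (\<lambda>i. x i + y i) = (\<lambda>t. \<phi> x t + \<phi> y t)"
  using fs unfolding factorization_structure_def by blast

lemma phi_scal: "x \<in> hspace m \<Longrightarrow> \<phi> (\<lambda>i. c * x i) = (\<lambda>t. c * \<phi> x t)"
  using fs unfolding factorization_structure_def by blast

lemma phi_inj: "inj_on \<phi> (hspace m)"
  using fs unfolding factorization_structure_def by blast

lemma phi_ts: "x \<in> hspace m \<Longrightarrow> \<phi> x \<in> tensor_space {1..m}"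
  using fs unfolding factorization_structure_def by blast

lemma zero_h: "(\<lambda>_. 0) \<in> hspace m" by (simp add: hspace_def)

lemma phi0: "\<phi> (\<lambda>_. 0) = (\<lambda>_. 0)"
  using phi_scal[OF zero_h, of 0] by simp

lemma phi_nz: "x \<in> hspace m \<Longrightarrow> x \<noteq> (\<lambda>_. 0) \<Longrightarrow> \<phi> x \<noteq> (\<lambda>_. 0)"
  using phi_inj zero_h phi0 unfolding inj_on_def by metis

definition ev :: "nat \<Rightarrow> nat \<Rightarrow> complex" where "ev i = (\<lambda>k. if k = i then 1 else 0)"

lemma phi_sum: "n \<le> Suc m \<Longrightarrow> \<phi> (\<lambda>k. \<Sum>i<n. c i * ev i k) = (\<lambda>t. \<Sum>i<n. c i * \<phi> (ev i) t)"
proof (induction n)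
  case 0 then show ?case using phi0 by simp
next
  case (Suc n)
  have h1: "(\<lambda>k. \<Sum>i<n. c i * ev i k) \<in> hspace m" using Suc.prems by (auto simp: hspace_def ev_def)
  have h2: "ev n \<in> hspace m" using Suc.prems by (auto simp: hspace_def ev_def)
  have "\<phi> (\<lambda>k. \<Sum>i<Suc n. c i * ev i k) = \<phi> (\<lambda>k. (\<Sum>i<n. c i * ev i k) + c n * ev n k)" by simp
  also have "\<dots> = (\<lambda>t. \<phi> (\<lambda>k. \<Sum>i<n. c i * ev i k) t + \<phi> (\<lambda>k. c n * ev n k) t)"
    using phi_add[OF h1, of "\<lambda>k. c n * ev n k"] phi_scal[OF h2] h2 by (simp add: hspace_def)
  also have "\<dots> = (\<lambda>t. \<Sum>i<Suc n. c i * \<phi> (ev i) t)"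
    using Suc phi_scal[OF h2] by simp
  finally show ?case .
qed

lemma psi_in: "psi_of m e F v \<in> hspace m"
  by (simp add: psi_of_def hspace_def)

lemma psi_expand: "psi_of m e F v = (\<lambda>k. \<Sum>i<Suc m. bform e (F i) v * ev i k)"
proof
  fix k
  show "psi_of m e F v k = (\<Sum>i<Suc m. bform e (F i) v * ev i k)"
  proof (cases "k \<le> m")
    case True
    then have "(\<Sum>i<Suc m. bform e (F i) v * ev i k) = (\<Sum>i<Suc m. if i = k then bform e (F k) v else 0)"
      by (intro sum.cong) (auto simp: ev_def)
    then show ?thesis using True by (simp add: psi_of_def)
  next
    case False
    then show ?thesis by (auto simp: psi_of_def ev_def intro!: sum.neutral)
  qed
qed

lemma phi_psi: "\<phi> (psi_of m e F v) = (\<lambda>t. \<Sum>i<Suc m. bform e (F i) v * \<phi> (ev i) t)"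
  unfolding psi_expand by (rule phi_sum) simp

lemma W_poly:
  "\<exists>P. (\<forall>x. degree (P x) \<le> e) \<and> (\<forall>x y. (\<forall>k\<in>{1..m}. x k = y k) \<longrightarrow> P x = P y) \<and>
       (\<forall>v x. \<phi> (psi_of m e F v) x = hom e (P x) v)"
proof (intro exI conjI allI impI)
  let ?P = "\<lambda>x. \<Sum>i<Suc m. smult (\<phi> (ev i) x) (Pc e (F i))"
  show "degree (?P x) \<le> e" for x
    by (rule degree_sum_le) (auto intro: order.trans[OF degree_smult_le] simp: degree_Pc)
  show "?P x = ?P y" if "\<forall>k\<in>{1..m}. x k = y k" for x y
  proof -
    have "\<phi> (ev i) x = \<phi> (ev i) y" if "i < Suc m" for i
    proof -
      have "ev i \<in> hspace m" using that by (auto simp: hspace_def ev_def)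
      then have "dep {1..m} (\<phi> (ev i))" using phi_ts tensor_space_dep by blast
      then show ?thesis using \<open>\<forall>k\<in>{1..m}. x k = y k\<close> unfolding dep_def by blast
    qed
    then show ?thesis by (intro sum.cong) auto
  qed
  show "\<phi> (psi_of m e F v) x = hom e (?P x) v" for v x
    unfolding phi_psi hom_sum[OF finite_lessThan] by (simp add: hom_smult hom_Pc algebra_simps)
qed

lemma psi_nz:
  assumes "fcurve m \<phi> i e F" "v \<noteq> (\<lambda>_. 0)"
  shows "psi_of m e F v \<noteq> (\<lambda>_. 0)"
proof -
  obtain k where "k \<le> m" "bform e (F k) v \<noteq> 0" using assms unfolding fcurve_def by blast
  then show ?thesis unfolding psi_of_def by (metis (mono_tags, lifting))
qed

lemma W_nz:
  assumes "fcurve m \<phi> i e F" "v \<noteq> (\<lambda>_. 0)"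
  shows "\<phi> (psi_of m e F v) \<noteq> (\<lambda>_. 0)"
  using phi_nz[OF psi_in psi_nz[OF assms]] .

lemma contr_scale: "contr r u (\<lambda>t. c * f t) x = c * contr r u f x"
  by (simp add: contr_def algebra_simps)

lemma W_contr:
  assumes fc: "fcurve m \<phi> r e F" and r: "r \<in> {1..m}"
  shows "contr r u (\<phi> (psi_of m e F u)) x = 0"
proof -
  obtain U where U: "zariski_open_P1 U" "U \<noteq> {}"
    "\<forall>v\<in>U. {x \<in> hspace m. \<phi> x \<in> Sigma0 m r v} = cline (psi_of m e F v)"
    using fc unfolding fcurve_def generic_P1_def by blast
  obtain P where P: "\<forall>x. degree (P x) \<le> e" "\<forall>v x. \<phi> (psi_of m e F v) x = hom e (P x) v"
    using W_poly by blast
  define G where "G = [:0,1:] * P (x(r:=True)) + [:1:] * P (x(r:=False))"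
  have d1: "degree ([:0,1:] * p) \<le> 1 + e" if "degree p \<le> e" for p :: "complex poly"
    using degree_mult_le[of "[:0,1:]" p] that by simp
  have dG: "degree G \<le> 1 + e" unfolding G_def
    by (rule degree_add_le) (use d1 P(1) in \<open>auto intro: le_SucI\<close>)
  have homG: "hom (1 + e) G v = contr r v (\<phi> (psi_of m e F v)) x" for v
  proof -
    have "hom (1 + e) G v = hom 1 [:0,1:] v * hom e (P (x(r:=True))) v + hom 1 [:1:] v * hom e (P (x(r:=False))) v"
      unfolding G_def hom_add by (subst hom_mult, simp, use P(1) in simp)+ simp
    then show ?thesis by (simp add: hom_lin' contr_def P(2))
  qed
  have "\<forall>v\<in>U. hom (1 + e) G v = 0"
  proof
    fix v assume "v \<in> U"
    then have "psi_of m e F v \<in> {x \<in> hspace m. \<phi> x \<in> Sigma0 m r v}" using U(3) cline_self by blast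
    then have "\<phi> (psi_of m e F v) \<in> Sigma0 m r v" by blast
    then show "hom (1 + e) G v = 0" unfolding homG using Sigma0_contr[OF r] by blast
  qed
  then have "G = 0" using vanish_zariski[OF U(1,2) dG] by blast
  then show ?thesis using homG[of u] by simp
qed

end



lemma two_by_two:
  fixes a1 b1 a2 b2 :: complex
  assumes "u \<noteq> (\<lambda>_. 0)" "u True * a1 + u False * b1 = 0" "u True * a2 + u False * b2 = 0"
  shows "a1 * b2 = a2 * b1"
proof -
  have e1: "u True * (a1 * b2 - a2 * b1) = 0"
  proof -
    have "u True * (a1 * b2 - a2 * b1) = b2 * (u True * a1 + u False * b1) - b1 * (u True * a2 + u False * b2)"
      by (simp add: algebra_simps)
    then show ?thesis using assms(2,3) by simp
  qed
  have e2: "u False * (a1 * b2 - a2 * b1) = 0"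
  proof -
    have "u False * (a1 * b2 - a2 * b1) = a1 * (u True * a2 + u False * b2) - a2 * (u True * a1 + u False * b1)"
      by (simp add: algebra_simps)
    then show ?thesis using assms(2,3) by simp
  qed
  show ?thesis
  proof (cases "u True = 0")
    case True
    then have "u False \<noteq> 0" using nonzero_fun_bool[OF assms(1)] by simp
    then show ?thesis using e2 by simp
  next
    case False then show ?thesis using e1 by simp
  qed
qed

definition chartv :: "complex \<Rightarrow> bool \<Rightarrow> complex" where
  "chartv t = (\<lambda>b. if b then t else 1)"

lemma chartv_nz: "chartv t \<noteq> (\<lambda>_. 0)"
proof
  assume "chartv t = (\<lambda>_. 0)"
  then have "chartv t False = 0" by simp
  then show False by (simp add: chartv_def)
qed

lemma e1_nz: "(\<lambda>b. if b then 1 else 0::complex) \<noteq> (\<lambda>_. 0)"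
proof
  assume "(\<lambda>b. if b then 1 else 0::complex) = (\<lambda>_. 0)"
  then have "(\<lambda>b. if b then 1 else 0::complex) True = 0" by (rule fun_cong)
  then show False by simp
qed

lemma e0_nz: "(\<lambda>b. if b then 0 else 1::complex) \<noteq> (\<lambda>_. 0)"
proof
  assume "(\<lambda>b. if b then 0 else 1::complex) = (\<lambda>_. 0)"
  then have "(\<lambda>b. if b then 0 else 1::complex) False = 0" by (rule fun_cong)
  then show False by simp
qed

lemma one_nz: "(\<lambda>b. 1::complex) \<noteq> (\<lambda>_. 0)"
proof
  assume "(\<lambda>b. 1::complex) = (\<lambda>_. 0)"
  then have "(\<lambda>b. 1::complex) False = 0" by (rule fun_cong)
  then show False by simp
qed

lemma slot_lemma:
  fixes P :: "(nat \<Rightarrow> bool) \<Rightarrow> complex poly"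
  assumes deg: "\<forall>x. degree (P x) \<le> d"
    and nz: "\<forall>v. v \<noteq> (\<lambda>_. 0) \<longrightarrow> (\<exists>x. hom d (P x) v \<noteq> 0)"
    and C: "\<forall>v. v \<noteq> (\<lambda>_. 0) \<longrightarrow> (\<exists>u. u \<noteq> (\<lambda>_. 0) \<and>
              (\<forall>x. u True * hom d (P (x(r:=True))) v + u False * hom d (P (x(r:=False))) v = 0))"
    and D: "\<forall>u. u \<noteq> (\<lambda>_. 0) \<longrightarrow> (\<exists>v. v \<noteq> (\<lambda>_. 0) \<and>
              (\<forall>x. u True * hom d (P (x(r:=True))) v + u False * hom d (P (x(r:=False))) v = 0))"
  shows "\<exists>p q. coprime p q \<and> p \<noteq> 0 \<and> q \<noteq> 0 \<and> 1 \<le> max (degree p) (degree q) \<and>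
           (\<forall>x. q * P (x(r:=True)) = p * P (x(r:=False)))"
proof -
  define PT where "PT x = P (x(r:=True))" for x
  define PF where "PF x = P (x(r:=False))" for x
  have rank1: "PT x * PF y = PT y * PF x" for x y
  proof -
    have "poly (PT x * PF y - PT y * PF x) t = 0" for t
    proof -
      obtain u where u: "u \<noteq> (\<lambda>_. 0)"
        "\<forall>x. u True * hom d (PT x) (chartv t) + u False * hom d (PF x) (chartv t) = 0"
        using C chartv_nz unfolding PT_def PF_def by blast
      have "hom d (PT x) (chartv t) * hom d (PF y) (chartv t) = hom d (PT y) (chartv t) * hom d (PF x) (chartv t)"
        by (rule two_by_two[OF u(1)]) (use u(2) in auto)
      then show ?thesis using deg unfolding PT_def PF_def chartv_def by (simp add: hom_chart)
    qed
    then have "PT x * PF y - PT y * PF x = 0" using poly_all_0_iff_0 by blast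
    then show ?thesis by simp
  qed
  obtain x0 where x0: "PT x0 \<noteq> 0 \<or> PF x0 \<noteq> 0"
  proof -
    obtain x where "hom d (P x) (\<lambda>_. 1) \<noteq> 0" using nz one_nz by blast
    then have "P x \<noteq> 0" by auto
    moreover have "P x = PT x \<or> P x = PF x" unfolding PT_def PF_def
      by (cases "x r") (simp_all add: fun_upd_idem)
    ultimately have "PT x \<noteq> 0 \<or> PF x \<noteq> 0" by auto
    then show ?thesis by (rule that)
  qed
  define g where "g = gcd (PT x0) (PF x0)"
  have g0: "g \<noteq> 0" using x0 unfolding g_def by simp
  obtain p q where pq: "PT x0 = p * g" "PF x0 = q * g" "coprime p q"
    using gcd_coprime_exists[OF g0[unfolded g_def]] unfolding g_def by blast
  have rel: "q * PT x = p * PF x" for x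
  proof -
    have "g * (q * PT x) = PF x0 * PT x" using pq by (simp add: algebra_simps)
    also have "\<dots> = PT x0 * PF x" using rank1[of x0 x] by (simp add: algebra_simps)
    also have "\<dots> = g * (p * PF x)" using pq by (simp add: algebra_simps)
    finally show ?thesis using g0 by simp
  qed
  have relhom: "coeff q 0 * hom d (PT x) v = coeff p 0 * hom d (PF x) v"
    if "degree p = 0" "degree q = 0" for x v
  proof -
    have h1: "hom (0 + d) (q * PT x) v = hom 0 q v * hom d (PT x) v"
      by (rule hom_mult) (use that deg in \<open>auto simp: PT_def\<close>)
    have h2: "hom (0 + d) (p * PF x) v = hom 0 p v * hom d (PF x) v"
      by (rule hom_mult) (use that deg in \<open>auto simp: PF_def\<close>)
    have "hom (0 + d) (q * PT x) v = hom (0 + d) (p * PF x) v" using rel by simp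
    then show ?thesis unfolding h1 h2 hom_const0 .
  qed
  have deg1: "1 \<le> max (degree p) (degree q)"
  proof (rule ccontr)
    assume "\<not> 1 \<le> max (degree p) (degree q)"
    then have d0: "degree p = 0" "degree q = 0" by auto
    have "coeff p 0 = 0"
    proof -
      obtain v where v: "v \<noteq> (\<lambda>_. 0)" "\<forall>x. hom d (PT x) v = 0"
        using D[rule_format, OF e1_nz] unfolding PT_def PF_def by auto
      obtain z where z: "hom d (P z) v \<noteq> 0" using nz v(1) by blast
      have "P z = PF z"
      proof (cases "z r")
        case True then have "P z = PT z" unfolding PT_def by (simp add: fun_upd_idem)
        then show ?thesis using z v(2) by simp
      next
        case False then show ?thesis unfolding PF_def by (simp add: fun_upd_idem)
      qed
      then show ?thesis using relhom[OF d0, of z v] v(2) z by simp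
    qed
    moreover have "coeff q 0 = 0"
    proof -
      obtain v where v: "v \<noteq> (\<lambda>_. 0)" "\<forall>x. hom d (PF x) v = 0"
        using D[rule_format, OF e0_nz] unfolding PT_def PF_def by auto
      obtain z where z: "hom d (P z) v \<noteq> 0" using nz v(1) by blast
      have "P z = PT z"
      proof (cases "z r")
        case True then show ?thesis unfolding PT_def by (simp add: fun_upd_idem)
      next
        case False then have "P z = PF z" unfolding PF_def by (simp add: fun_upd_idem)
        then show ?thesis using z v(2) by simp
      qed
      then show ?thesis using relhom[OF d0, of z v] v(2) z by simp
    qed
    ultimately have "p = 0" "q = 0" using d0 leading_coeff_0_iff[of p] leading_coeff_0_iff[of q] by simp_all
    then show False using pq(3) by simp
  qed
  have "p \<noteq> 0"
  proof
    assume "p = 0"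
    then have "is_unit q" using pq(3) by simp
    then have "degree q = 0" using is_unit_iff_degree[of q] by (cases "q = 0") auto
    then show False using deg1 \<open>p = 0\<close> by simp
  qed
  moreover have "q \<noteq> 0"
  proof
    assume "q = 0"
    then have "is_unit p" using pq(3) by simp
    then have "degree p = 0" using is_unit_iff_degree[of p] by (cases "p = 0") auto
    then show False using deg1 \<open>q = 0\<close> by simp
  qed
  moreover have "\<forall>x. q * P (x(r:=True)) = p * P (x(r:=False))" using rel unfolding PT_def PF_def by simp
  ultimately show ?thesis using pq(3) deg1 by (intro exI[where x=p] exI[where x=q]) simp
qed


lemma peel_induct:
  fixes P :: "(nat \<Rightarrow> bool) \<Rightarrow> complex poly" and L :: "nat \<Rightarrow> bool \<Rightarrow> complex poly" and k :: "nat \<Rightarrow> nat"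
  assumes fS: "finite S"
   and Lnz: "\<forall>r\<in>S. \<forall>b. L r b \<noteq> 0"
   and Lcop: "\<forall>r\<in>S. coprime (L r True) (L r False)"
   and kdef: "\<forall>r\<in>S. k r = max (degree (L r True)) (degree (L r False))"
   and rel: "\<forall>r\<in>S. \<forall>x. L r False * P (x(r:=True)) = L r True * P (x(r:=False))"
   and deg: "\<forall>x. degree (P x) \<le> d"
   and dP: "\<forall>x y. (\<forall>i\<in>A. x i = y i) \<longrightarrow> P x = P y"
   and nz: "\<exists>x. P x \<noteq> 0"
   and RS: "R \<subseteq> S"
  shows "\<exists>s. (\<forall>x. P x = (\<Prod>r\<in>R. L r (x r)) * s x) \<and> (\<forall>x y. (\<forall>i\<in>A - R. x i = y i) \<longrightarrow> s x = s y) \<and>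
             (\<forall>x. s x \<noteq> 0 \<longrightarrow> degree (s x) + (\<Sum>r\<in>R. k r) \<le> d) \<and> (\<exists>x. s x \<noteq> 0)"
  using finite_subset[OF RS fS] RS
proof (induction R rule: finite_induct)
  case empty
  show ?case by (rule exI[where x=P]) (use deg dP nz in simp)
next
  case (insert r R)
  then have rS: "r \<in> S" and RS': "R \<subseteq> S" by auto
  obtain s where s1: "\<forall>x. P x = (\<Prod>r\<in>R. L r (x r)) * s x"
    and s2: "\<forall>x y. (\<forall>i\<in>A - R. x i = y i) \<longrightarrow> s x = s y"
    and s3: "\<forall>x. s x \<noteq> 0 \<longrightarrow> degree (s x) + (\<Sum>r\<in>R. k r) \<le> d"
    and s4: "\<exists>x. s x \<noteq> 0"
    using insert.IH[OF RS'] by blast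
  define p where "p = L r True"
  define q where "q = L r False"
  have p0: "p \<noteq> 0" and q0: "q \<noteq> 0" using Lnz rS unfolding p_def q_def by auto
  have cop: "coprime p q" using Lcop rS unfolding p_def q_def by auto
  define \<Pi> where "\<Pi> x = (\<Prod>r\<in>R. L r (x r))" for x
  define s' where "s' x = s (x(r:=True)) div p" for x
  have \<Pi>upd: "\<Pi> (x(r:=b)) = \<Pi> x" for x b
    unfolding \<Pi>_def by (rule prod.cong) (use insert.hyps(2) in auto)
  have \<Pi>nz: "\<Pi> x \<noteq> 0" for x
    unfolding \<Pi>_def using insert.hyps(1) Lnz RS' by (auto simp: prod_zero_iff)
  have ab: "s (x(r:=True)) = p * s' x \<and> s (x(r:=False)) = q * s' x" for x
  proof -
    define a where "a = s (x(r:=True))"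
    define b where "b = s (x(r:=False))"
    have "q * P (x(r:=True)) = p * P (x(r:=False))" using rel rS unfolding p_def q_def by blast
    moreover have "P (x(r:=True)) = \<Pi> x * a" using s1 \<Pi>upd unfolding a_def \<Pi>_def by metis
    moreover have "P (x(r:=False)) = \<Pi> x * b" using s1 \<Pi>upd unfolding b_def \<Pi>_def by metis
    ultimately have "\<Pi> x * (q * a) = \<Pi> x * (p * b)" by (simp add: algebra_simps)
    then have qa: "q * a = p * b" using \<Pi>nz[of x] by simp
    then have "p dvd q * a" by simp
    then have "p dvd a" using coprime_dvd_mult_right_iff[OF cop] by simp
    then have a': "a = p * s' x" unfolding s'_def a_def[symmetric] by simp
    then have "p * b = p * (q * s' x)" using qa by (simp only: mult.left_commute)
    then have "b = q * s' x" using p0 by auto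
    then show ?thesis using a' unfolding a_def b_def by simp
  qed
  have sx: "s x = L r (x r) * s' x" for x
  proof (cases "x r")
    case True
    then have "x(r:=True) = x" by (simp add: fun_upd_idem_iff)
    then show ?thesis using ab[of x] True unfolding p_def by simp
  next
    case False
    then have "x(r:=False) = x" by (simp add: fun_upd_idem_iff)
    then show ?thesis using ab[of x] False unfolding q_def by simp
  qed
  show ?case
  proof (rule exI[where x=s'], intro conjI allI impI)
    fix x
    have "P x = \<Pi> x * s x" using s1 unfolding \<Pi>_def by simp
    also have "\<dots> = (L r (x r) * \<Pi> x) * s' x" unfolding sx by (simp add: algebra_simps)
    also have "L r (x r) * \<Pi> x = (\<Prod>r\<in>insert r R. L r (x r))"
      unfolding \<Pi>_def using insert.hyps(1,2) by simp
    finally show "P x = (\<Prod>r\<in>insert r R. L r (x r)) * s' x" .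
  next
    fix x y :: "nat \<Rightarrow> bool"
    assume xy: "\<forall>i\<in>A - insert r R. x i = y i"
    have "\<forall>i\<in>A - R. (x(r:=True)) i = (y(r:=True)) i" using xy by auto
    then have "s (x(r:=True)) = s (y(r:=True))" using s2 by blast
    then show "s' x = s' y" unfolding s'_def by simp
  next
    fix x assume nz': "s' x \<noteq> 0"
    have "s (x(r:=True)) \<noteq> 0" using ab[of x] p0 nz' by simp
    then have "degree (s (x(r:=True))) + (\<Sum>r\<in>R. k r) \<le> d" using s3 by blast
    moreover have "degree (s (x(r:=True))) = degree p + degree (s' x)" using ab[of x] p0 nz' by (simp add: degree_mult_eq)
    moreover have "s (x(r:=False)) \<noteq> 0" using ab[of x] q0 nz' by simp
    then have "degree (s (x(r:=False))) + (\<Sum>r\<in>R. k r) \<le> d" using s3 by blast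
    moreover have "degree (s (x(r:=False))) = degree q + degree (s' x)" using ab[of x] q0 nz' by (simp add: degree_mult_eq)
    moreover have "k r = max (degree p) (degree q)" using kdef rS unfolding p_def q_def by blast
    moreover have "(\<Sum>r\<in>insert r R. k r) = k r + (\<Sum>r\<in>R. k r)" using insert.hyps(1,2) by simp
    ultimately show "degree (s' x) + (\<Sum>r\<in>insert r R. k r) \<le> d" by linarith
  next
    obtain x where "s x \<noteq> 0" using s4 by blast
    then have "s' x \<noteq> 0" using sx[of x] by auto
    then show "\<exists>x. s' x \<noteq> 0" by blast
  qed
qed


lemma coprime_det:
  fixes p q :: "complex poly"
  assumes cop: "coprime p q" and dp: "degree p \<le> 1" and dq: "degree q \<le> 1"
    and mx: "max (degree p) (degree q) = 1"
  shows "coeff p 0 * coeff q 1 \<noteq> coeff p 1 * coeff q 0"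
proof
  assume eq: "coeff p 0 * coeff q 1 = coeff p 1 * coeff q 0"
  have sm: "smult (coeff p 1) q = smult (coeff q 1) p"
  proof (rule poly_eqI)
    fix n
    show "coeff (smult (coeff p 1) q) n = coeff (smult (coeff q 1) p) n"
    proof (cases "n \<le> 1")
      case True
      then have "n = 0 \<or> n = 1" by auto
      then show ?thesis using eq by (auto simp: algebra_simps)
    next
      case False
      then have "coeff p n = 0" "coeff q n = 0" using dp dq by (simp_all add: coeff_eq_0)
      then show ?thesis by simp
    qed
  qed
  have "degree p = 1 \<or> degree q = 1" using mx by (auto simp: max_def split: if_splits)
  then show False
  proof
    assume d1: "degree p = 1"
    then have c1: "coeff p 1 \<noteq> 0" using leading_coeff_0_iff[of p] by auto
    have "q = smult (inverse (coeff p 1)) (smult (coeff p 1) q)" using c1 by simp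
    also have "\<dots> = smult (inverse (coeff p 1) * coeff q 1) p" unfolding sm by simp
    finally have "p dvd q" using dvd_smult[OF dvd_refl[of p]] by (metis)
    then have "is_unit p" using coprime_common_divisor[OF cop dvd_refl] by simp
    then have "degree p = 0" using is_unit_iff_degree[of p] by (cases "p = 0") auto
    then show False using d1 by simp
  next
    assume d1: "degree q = 1"
    then have c1: "coeff q 1 \<noteq> 0" using leading_coeff_0_iff[of q] by auto
    have "p = smult (inverse (coeff q 1)) (smult (coeff q 1) p)" using c1 by simp
    also have "\<dots> = smult (inverse (coeff q 1) * coeff p 1) q" unfolding sm[symmetric] by simp
    finally have "q dvd p" using dvd_smult[OF dvd_refl[of q]] by (metis)
    then have "is_unit q" using coprime_common_divisor[OF cop _ dvd_refl] by simp
    then have "degree q = 0" using is_unit_iff_degree[of q] by (cases "q = 0") auto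
    then show False using d1 by simp
  qed
qed


lemma sum_ge1_eq:
  assumes "finite S" "\<forall>r\<in>S. 1 \<le> k r" "(\<Sum>r\<in>S. k r) \<le> card S"
  shows "\<forall>r\<in>S. k r = (1::nat)"
proof (rule ccontr)
  assume "\<not> (\<forall>r\<in>S. k r = 1)"
  then have ex: "\<exists>r\<in>S. (1::nat) < k r" using assms(2) by force
  have "(\<Sum>r\<in>S. (1::nat)) < (\<Sum>r\<in>S. k r)"
    using sum_strict_mono_ex1[OF assms(1), of "\<lambda>_. 1" k] ex assms(2) by auto
  then show False using assms(3) by simp
qed

lemma core:
  fixes P :: "(nat \<Rightarrow> bool) \<Rightarrow> complex poly" and S A :: "nat set"
  assumes fS: "finite S" and dS: "card S = d"
    and deg: "\<forall>x. degree (P x) \<le> d"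
    and dP: "\<forall>x y. (\<forall>i\<in>A. x i = y i) \<longrightarrow> P x = P y"
    and nz: "\<forall>v. v \<noteq> (\<lambda>_. 0) \<longrightarrow> (\<exists>x. hom d (P x) v \<noteq> 0)"
    and C: "\<forall>r\<in>S. \<forall>v. v \<noteq> (\<lambda>_. 0) \<longrightarrow> (\<exists>u. u \<noteq> (\<lambda>_. 0) \<and>
              (\<forall>x. u True * hom d (P (x(r:=True))) v + u False * hom d (P (x(r:=False))) v = 0))"
    and D: "\<forall>r\<in>S. \<forall>u. u \<noteq> (\<lambda>_. 0) \<longrightarrow> (\<exists>v. v \<noteq> (\<lambda>_. 0) \<and>
              (\<forall>x. u True * hom d (P (x(r:=True))) v + u False * hom d (P (x(r:=False))) v = 0))"
  shows "\<exists>L s. (\<forall>r\<in>S. \<forall>b. degree (L r b) \<le> 1) \<and>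
     (\<forall>r\<in>S. coeff (L r True) 0 * coeff (L r False) 1 \<noteq> coeff (L r True) 1 * coeff (L r False) 0) \<and>
     (\<forall>x. degree (s x) = 0) \<and> (\<forall>x y. (\<forall>i\<in>A - S. x i = y i) \<longrightarrow> s x = s y) \<and>
     (\<exists>x. s x \<noteq> 0) \<and> (\<forall>x. P x = (\<Prod>r\<in>S. L r (x r)) * s x)"
proof -
  have "\<forall>r\<in>S. \<exists>p q. coprime p q \<and> p \<noteq> 0 \<and> q \<noteq> 0 \<and> 1 \<le> max (degree p) (degree q) \<and>
           (\<forall>x. q * P (x(r:=True)) = p * P (x(r:=False)))"
  proof
    fix r assume "r \<in> S"
    then show "\<exists>p q. coprime p q \<and> p \<noteq> 0 \<and> q \<noteq> 0 \<and> 1 \<le> max (degree p) (degree q) \<and>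
           (\<forall>x. q * P (x(r:=True)) = p * P (x(r:=False)))"
      by (intro slot_lemma[OF deg nz]) (use C D in auto)
  qed
  from bchoice[OF this] obtain pp where "\<forall>r\<in>S. \<exists>q. coprime (pp r) q \<and> pp r \<noteq> 0 \<and> q \<noteq> 0 \<and>
      1 \<le> max (degree (pp r)) (degree q) \<and> (\<forall>x. q * P (x(r:=True)) = pp r * P (x(r:=False)))"
    by (elim exE) (rule that, assumption)
  from bchoice[OF this] obtain qq where pq: "\<forall>r\<in>S. coprime (pp r) (qq r) \<and> pp r \<noteq> 0 \<and> qq r \<noteq> 0 \<and>
      1 \<le> max (degree (pp r)) (degree (qq r)) \<and> (\<forall>x. qq r * P (x(r:=True)) = pp r * P (x(r:=False)))"
    by (elim exE) (rule that, assumption)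
  define L where "L r b = (if b then pp r else qq r)" for r b
  define k where "k r = max (degree (pp r)) (degree (qq r))" for r
  have nz1: "\<exists>x. P x \<noteq> 0"
  proof -
    obtain x where "hom d (P x) (\<lambda>_. 1) \<noteq> 0" using nz one_nz by blast
    then have "P x \<noteq> 0" by auto
    then show ?thesis by blast
  qed
  have "\<exists>s. (\<forall>x. P x = (\<Prod>r\<in>S. L r (x r)) * s x) \<and> (\<forall>x y. (\<forall>i\<in>A - S. x i = y i) \<longrightarrow> s x = s y) \<and>
             (\<forall>x. s x \<noteq> 0 \<longrightarrow> degree (s x) + (\<Sum>r\<in>S. k r) \<le> d) \<and> (\<exists>x. s x \<noteq> 0)"
    by (rule peel_induct[OF fS _ _ _ _ deg dP nz1 subset_refl]) (use pq in \<open>auto simp: L_def k_def\<close>)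
  then obtain s where s1: "\<forall>x. P x = (\<Prod>r\<in>S. L r (x r)) * s x"
    and s2: "\<forall>x y. (\<forall>i\<in>A - S. x i = y i) \<longrightarrow> s x = s y"
    and s3: "\<forall>x. s x \<noteq> 0 \<longrightarrow> degree (s x) + (\<Sum>r\<in>S. k r) \<le> d"
    and s4: "\<exists>x. s x \<noteq> 0" by blast
  have ksum: "(\<Sum>r\<in>S. k r) \<le> card S" using s3 s4 dS by fastforce
  have k1: "\<forall>r\<in>S. k r = 1"
    by (rule sum_ge1_eq[OF fS _ ksum]) (use pq in \<open>auto simp: k_def\<close>)
  have ksum': "(\<Sum>r\<in>S. k r) = card S" using k1 by simp
  show ?thesis
  proof (intro exI[where x=L] exI[where x=s] conjI)
    show "\<forall>r\<in>S. \<forall>b. degree (L r b) \<le> 1" using k1 unfolding L_def k_def by auto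
    show "\<forall>r\<in>S. coeff (L r True) 0 * coeff (L r False) 1 \<noteq> coeff (L r True) 1 * coeff (L r False) 0"
    proof
      fix r assume r: "r \<in> S"
      show "coeff (L r True) 0 * coeff (L r False) 1 \<noteq> coeff (L r True) 1 * coeff (L r False) 0"
        unfolding L_def by (rule coprime_det) (use pq k1 r in \<open>auto simp: k_def\<close>)
    qed
    show "\<forall>x. degree (s x) = 0"
    proof
      fix x show "degree (s x) = 0"
        using s3[rule_format, of x] ksum' dS by (cases "s x = 0") auto
    qed
  qed (use s1 s2 s4 in auto)
qed



definition isform :: "nat \<Rightarrow> ((bool \<Rightarrow> complex) \<Rightarrow> complex) \<Rightarrow> bool" where
  "isform N f \<longleftrightarrow> (\<exists>q. degree q \<le> N \<and> (\<forall>v. f v = hom N q v))"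

lemma isform_mult:
  assumes "isform N1 f" "isform N2 g" shows "isform (N1 + N2) (\<lambda>v. f v * g v)"
proof -
  obtain p where p: "degree p \<le> N1" "\<forall>v. f v = hom N1 p v" using assms(1) unfolding isform_def by blast
  obtain q where q: "degree q \<le> N2" "\<forall>v. g v = hom N2 q v" using assms(2) unfolding isform_def by blast
  have "degree (p * q) \<le> N1 + N2" using degree_mult_le[of p q] p(1) q(1) by linarith
  moreover have "\<forall>v. f v * g v = hom (N1 + N2) (p * q) v" using p q hom_mult by simp
  ultimately show ?thesis unfolding isform_def by blast
qed

lemma isform_add:
  assumes "isform N f" "isform N g" shows "isform N (\<lambda>v. f v + g v)"
proof -
  obtain p where p: "degree p \<le> N" "\<forall>v. f v = hom N p v" using assms(1) unfolding isform_def by blast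
  obtain q where q: "degree q \<le> N" "\<forall>v. g v = hom N q v" using assms(2) unfolding isform_def by blast
  have "degree (p + q) \<le> N" using degree_add_le p(1) q(1) by blast
  moreover have "\<forall>v. f v + g v = hom N (p + q) v" using p q hom_add by simp
  ultimately show ?thesis unfolding isform_def by blast
qed

lemma isform_scal:
  assumes "isform N f" shows "isform N (\<lambda>v. c * f v)"
proof -
  obtain p where p: "degree p \<le> N" "\<forall>v. f v = hom N p v" using assms(1) unfolding isform_def by blast
  have "degree (smult c p) \<le> N" using degree_smult_le p(1) order.trans by blast
  moreover have "\<forall>v. c * f v = hom N (smult c p) v" using p hom_smult by simp
  ultimately show ?thesis unfolding isform_def by blast
qed

lemma isform_const: "isform 0 (\<lambda>v. c)"
  unfolding isform_def by (rule exI[where x="[:c:]"]) (simp add: hom_const0)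

lemma isform_zero: "isform N (\<lambda>v. 0)"
  unfolding isform_def by (rule exI[where x=0]) simp

lemma isform_lin: "isform 1 (\<lambda>v. a * v True + b * v False)"
  unfolding isform_def by (rule exI[where x="[:b, a:]"]) (simp add: hom_lin' algebra_simps)

lemma isform_pow: "isform 1 f \<Longrightarrow> isform k (\<lambda>v. f v ^ k)"
proof (induction k)
  case 0 then show ?case using isform_const[of 1] by simp
next
  case (Suc k)
  have "isform (1 + k) (\<lambda>v. f v * f v ^ k)" by (rule isform_mult[OF Suc.prems Suc.IH[OF Suc.prems]])
  then show ?case by simp
qed

lemma isform_sum: "finite A \<Longrightarrow> (\<forall>i\<in>A. isform N (f i)) \<Longrightarrow> isform N (\<lambda>v. \<Sum>i\<in>A. f i v)"
proof (induction A rule: finite_induct)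
  case empty then show ?case using isform_zero by simp
next
  case (insert a A)
  then show ?case using isform_add[of N "f a" "\<lambda>v. \<Sum>i\<in>A. f i v"] by simp
qed

lemma isform_hom: "degree p \<le> N \<Longrightarrow> isform N (hom N p)"
  unfolding isform_def by blast

lemma compose_form:
  assumes "degree p \<le> N"
  shows "\<exists>q. degree q \<le> N \<and> (\<forall>v. hom N p (app2 A v) = hom N q v)"
proof -
  have "isform N (\<lambda>v. \<Sum>k\<le>N. coeff p k * (app2 A v True ^ k * app2 A v False ^ (N - k)))"
  proof (rule isform_sum, simp, rule ballI)
    fix k assume "k \<in> {..N}"
    then have kN: "k + (N - k) = N" by simp
    have l1: "isform 1 (\<lambda>v. app2 A v True)" unfolding app2_def by (rule isform_lin)
    have l2: "isform 1 (\<lambda>v. app2 A v False)" unfolding app2_def by (rule isform_lin)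
    have "isform (k + (N - k)) (\<lambda>v. app2 A v True ^ k * app2 A v False ^ (N - k))"
      by (rule isform_mult[OF isform_pow[OF l1] isform_pow[OF l2]])
    then show "isform N (\<lambda>v. coeff p k * (app2 A v True ^ k * app2 A v False ^ (N - k)))"
      using kN isform_scal by simp
  qed
  then show ?thesis unfolding isform_def hom_def bform_def by (simp add: algebra_simps)
qed

definition Jf :: "(bool \<Rightarrow> complex) \<Rightarrow> bool \<Rightarrow> complex" where
  "Jf v = (\<lambda>b. if b then v False else - v True)"

lemma Jf_ann: "Jf v \<in> ann v"
  by (simp add: Jf_def ann_def algebra_simps)

lemma Jf_nz: "v \<noteq> (\<lambda>_. 0) \<Longrightarrow> Jf v \<noteq> (\<lambda>_. 0)"
proof
  assume "v \<noteq> (\<lambda>_. 0)" "Jf v = (\<lambda>_. 0)"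
  then have "Jf v True = 0" "Jf v False = 0" by simp_all
  then have "v = (\<lambda>_. 0)" unfolding Jf_def by (auto simp: fun_eq_iff split: if_splits) (metis (full_types))
  then show False using \<open>v \<noteq> (\<lambda>_. 0)\<close> by simp
qed

lemma Jf_Jf: "Jf (Jf v) = (\<lambda>b. - v b)"
  by (auto simp: Jf_def fun_eq_iff)

lemma Jf_neg: "Jf (\<lambda>b. - v b) = (\<lambda>b. - Jf v b)"
  by (auto simp: Jf_def fun_eq_iff)

lemma app2_neg: "app2 M (\<lambda>b. - v b) = (\<lambda>b. - app2 M v b)"
  by (auto simp: app2_def fun_eq_iff algebra_simps)

lemma app2_zero: "app2 M (\<lambda>_. 0) = (\<lambda>_. 0)"
  by (simp add: app2_def)

lemma app2_scal: "app2 M (\<lambda>b. c * v b) = (\<lambda>b. c * app2 M v b)"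
  by (auto simp: app2_def fun_eq_iff algebra_simps)

lemma inv_nz:
  assumes "invertible2 M" "\<alpha> \<noteq> (\<lambda>_. 0)" shows "app2 M \<alpha> \<noteq> (\<lambda>_. 0)"
proof
  assume a: "app2 M \<alpha> = (\<lambda>_. 0)"
  obtain N where N: "\<forall>\<alpha>. app2 N (app2 M \<alpha>) = \<alpha> \<and> app2 M (app2 N \<alpha>) = \<alpha>"
    using assms(1) unfolding invertible2_def by blast
  have "\<alpha> = app2 N (app2 M \<alpha>)" using N by simp
  also have "\<dots> = (\<lambda>_. 0)" unfolding a app2_zero ..
  finally show False using assms(2) by simp
qed

definition mmul :: "(bool \<Rightarrow> bool \<Rightarrow> complex) \<Rightarrow> (bool \<Rightarrow> bool \<Rightarrow> complex) \<Rightarrow> bool \<Rightarrow> bool \<Rightarrow> complex" where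
  "mmul A B = (\<lambda>b c. A b True * B True c + A b False * B False c)"

lemma app2_app2: "app2 A (app2 B v) = app2 (mmul A B) v"
  by (auto simp: app2_def mmul_def fun_eq_iff algebra_simps)

definition J0 :: "bool \<Rightarrow> bool \<Rightarrow> complex" where
  "J0 = (\<lambda>b c. if b then (if c then 0 else 1) else (if c then -1 else 0))"

lemma Jf_app2: "Jf v = app2 J0 v"
  by (auto simp: Jf_def app2_def J0_def fun_eq_iff)

definition uu :: "(bool \<Rightarrow> bool \<Rightarrow> complex) \<Rightarrow> (bool \<Rightarrow> complex) \<Rightarrow> bool \<Rightarrow> complex" where
  "uu M v = Jf (app2 M (Jf v))"

lemma uu_lin: "uu M v = app2 (mmul J0 (mmul M J0)) v"
  unfolding uu_def Jf_app2 app2_app2 ..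

lemma uu_nz: "invertible2 M \<Longrightarrow> v \<noteq> (\<lambda>_. 0) \<Longrightarrow> uu M v \<noteq> (\<lambda>_. 0)"
  unfolding uu_def by (intro Jf_nz inv_nz) (auto intro: Jf_nz)

lemma uu_surj:
  assumes "invertible2 M" shows "\<exists>v. uu M v = u0"
proof -
  obtain N where N: "\<forall>\<alpha>. app2 N (app2 M \<alpha>) = \<alpha> \<and> app2 M (app2 N \<alpha>) = \<alpha>"
    using assms(1) unfolding invertible2_def by blast
  have "uu M (Jf (app2 N (Jf u0))) = u0"
    unfolding uu_def Jf_Jf app2_neg Jf_neg using N by (simp add: Jf_Jf)
  then show ?thesis by blast
qed

lemma ann_scal:
  assumes "v \<noteq> (\<lambda>_. 0)" "\<alpha> \<in> ann v" "\<alpha> \<noteq> (\<lambda>_. 0)"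
  shows "\<exists>c. c \<noteq> 0 \<and> \<alpha> = (\<lambda>b. c * Jf v b)"
proof -
  have rel: "\<alpha> True * v True + \<alpha> False * v False = 0" using assms(2) by (simp add: ann_def)
  show ?thesis
  proof (cases "v False = 0")
    case True
    then have vT: "v True \<noteq> 0" using assms(1) by (metis nonzero_fun_bool)
    then have aT: "\<alpha> True = 0" using rel True by simp
    define c where "c = - \<alpha> False / v True"
    have "\<alpha> = (\<lambda>b. c * Jf v b)" using aT True vT unfolding c_def Jf_def by (auto simp: fun_eq_iff)
    moreover have "c \<noteq> 0"
    proof
      assume "c = 0" then have "\<alpha> False = 0" using vT unfolding c_def by simp
      then have "\<alpha> = (\<lambda>_. 0)" using aT by (auto simp: fun_eq_iff) (metis (full_types))
      then show False using assms(3) by simp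
    qed
    ultimately show ?thesis by blast
  next
    case False
    define c where "c = \<alpha> True / v False"
    have aF: "\<alpha> False = - \<alpha> True * v True / v False" using rel False by (simp add: field_simps add_eq_0_iff)
    have "\<alpha> = (\<lambda>b. c * Jf v b)" using aF False unfolding c_def Jf_def by (auto simp: fun_eq_iff)
    moreover have "c \<noteq> 0"
    proof
      assume "c = 0" then have "\<alpha> True = 0" using False unfolding c_def by simp
      then have "\<alpha> = (\<lambda>_. 0)" using aF by (auto simp: fun_eq_iff) (metis (full_types))
      then show False using assms(3) by simp
    qed
    ultimately show ?thesis by blast
  qed
qed


definition Tt :: "((nat \<Rightarrow> bool) \<Rightarrow> complex) \<Rightarrow> (nat \<Rightarrow> bool \<Rightarrow> bool \<Rightarrow> complex) \<Rightarrow> nat set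
   \<Rightarrow> (bool \<Rightarrow> complex) \<Rightarrow> (nat \<Rightarrow> bool) \<Rightarrow> complex" where
  "Tt \<gamma> M S \<alpha> = (\<lambda>x. \<gamma> x * (\<Prod>r\<in>S. app2 (M r) \<alpha> (x r)))"

definition pickx :: "(nat \<Rightarrow> bool \<Rightarrow> bool \<Rightarrow> complex) \<Rightarrow> nat set \<Rightarrow> (bool \<Rightarrow> complex) \<Rightarrow> (nat \<Rightarrow> bool) \<Rightarrow> nat \<Rightarrow> bool" where
  "pickx M S' \<alpha> y = (\<lambda>i. if i \<in> S' then (SOME b. app2 (M i) \<alpha> b \<noteq> 0) else y i)"

lemma pickx_nz:
  assumes "\<forall>r\<in>S'. invertible2 (M r)" "\<alpha> \<noteq> (\<lambda>_. 0)" "i \<in> S'"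
  shows "app2 (M i) \<alpha> (pickx M S' \<alpha> y i) \<noteq> 0"
proof -
  have "app2 (M i) \<alpha> \<noteq> (\<lambda>_. 0)" using inv_nz assms by blast
  then have "\<exists>b. app2 (M i) \<alpha> b \<noteq> 0" by auto
  then have "app2 (M i) \<alpha> (SOME b. app2 (M i) \<alpha> b \<noteq> 0) \<noteq> 0" by (rule someI_ex)
  then show ?thesis unfolding pickx_def using assms(3) by simp
qed

lemma key_slot:
  assumes fS: "finite S" and rS: "r \<notin> S" and dg: "dep ({1..m} - S) \<gamma>"
    and inv: "\<forall>r\<in>S. invertible2 (M r)" and a0: "\<alpha> \<noteq> (\<lambda>_. 0)"
    and c: "\<forall>x. contr r u (Tt \<gamma> M S \<alpha>) x = 0"
  shows "u True * \<gamma> (y(r:=True)) + u False * \<gamma> (y(r:=False)) = 0"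
proof -
  define x where "x = pickx M S \<alpha> y"
  define \<Pi> where "\<Pi> = (\<Prod>i\<in>S. app2 (M i) \<alpha> (x i))"
  have \<Pi>nz: "\<Pi> \<noteq> 0" unfolding \<Pi>_def x_def using fS pickx_nz[OF inv a0] by (simp add: prod_zero_iff)
  have T: "Tt \<gamma> M S \<alpha> (x(r:=b)) = \<gamma> (y(r:=b)) * \<Pi>" for b
  proof -
    have "(\<Prod>i\<in>S. app2 (M i) \<alpha> ((x(r:=b)) i)) = \<Pi>" unfolding \<Pi>_def
      by (rule prod.cong) (use rS in auto)
    moreover have "\<gamma> (x(r:=b)) = \<gamma> (y(r:=b))"
      using dg unfolding dep_def x_def pickx_def by auto
    ultimately show ?thesis unfolding Tt_def by simp
  qed
  have "contr r u (Tt \<gamma> M S \<alpha>) x = \<Pi> * (u True * \<gamma> (y(r:=True)) + u False * \<gamma> (y(r:=False)))"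
    unfolding contr_def T by (simp add: algebra_simps)
  then show ?thesis using c \<Pi>nz by simp
qed

lemma key_notin:
  assumes fS: "finite S" and rS: "r \<notin> S" and dg: "dep ({1..m} - S) \<gamma>"
    and inv: "\<forall>r\<in>S. invertible2 (M r)"
    and c1: "\<exists>\<alpha>. \<alpha> \<noteq> (\<lambda>_. 0) \<and> (\<forall>x. contr r (\<lambda>b. if b then 1 else 0) (Tt \<gamma> M S \<alpha>) x = 0)"
    and c0: "\<exists>\<alpha>. \<alpha> \<noteq> (\<lambda>_. 0) \<and> (\<forall>x. contr r (\<lambda>b. if b then 0 else 1) (Tt \<gamma> M S \<alpha>) x = 0)"
  shows "\<gamma> = (\<lambda>_. 0)"
proof
  fix y
  obtain \<alpha>1 where a1: "\<alpha>1 \<noteq> (\<lambda>_. 0)" "\<forall>x. contr r (\<lambda>b. if b then 1 else 0) (Tt \<gamma> M S \<alpha>1) x = 0"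
    using c1 by blast
  obtain \<alpha>0 where a0: "\<alpha>0 \<noteq> (\<lambda>_. 0)" "\<forall>x. contr r (\<lambda>b. if b then 0 else 1) (Tt \<gamma> M S \<alpha>0) x = 0"
    using c0 by blast
  have "\<gamma> (y(r:=True)) = 0" using key_slot[OF fS rS dg inv a1] by simp
  moreover have "\<gamma> (y(r:=False)) = 0" using key_slot[OF fS rS dg inv a0] by simp
  ultimately show "\<gamma> y = 0"
    by (cases "y r") (simp_all add: fun_upd_idem)
qed

lemma proj_lemma:
  assumes fS: "finite S" and jS: "j \<in> S" and dg: "dep ({1..m} - S) \<gamma>" and g0: "\<gamma> \<noteq> (\<lambda>_. 0)"
    and inv: "\<forall>r\<in>S. invertible2 (M r)"
    and c: "\<forall>v. v \<noteq> (\<lambda>_. 0) \<longrightarrow> (\<forall>x. contr j v (Tt \<gamma> M S (Jf v)) x = 0)"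
  shows "proj_identity (M j)"
proof -
  obtain y where y: "\<gamma> y \<noteq> 0" using g0 by auto
  have rel: "v True * app2 (M j) (Jf v) True + v False * app2 (M j) (Jf v) False = 0"
    if v0: "v \<noteq> (\<lambda>_. 0)" for v
  proof -
    define \<alpha> where "\<alpha> = Jf v"
    have a0: "\<alpha> \<noteq> (\<lambda>_. 0)" unfolding \<alpha>_def using Jf_nz[OF v0] .
    define x where "x = pickx M (S - {j}) \<alpha> y"
    define \<Pi> where "\<Pi> = (\<Prod>i\<in>S - {j}. app2 (M i) \<alpha> (x i))"
    have \<Pi>nz: "\<Pi> \<noteq> 0" unfolding \<Pi>_def x_def using fS pickx_nz[of "S - {j}" M \<alpha>] inv a0
      by (simp add: prod_zero_iff)
    have T: "Tt \<gamma> M S \<alpha> (x(j:=b)) = \<gamma> y * (app2 (M j) \<alpha> b * \<Pi>)" for b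
    proof -
      have "(\<Prod>i\<in>S. app2 (M i) \<alpha> ((x(j:=b)) i)) = app2 (M j) \<alpha> b * (\<Prod>i\<in>S - {j}. app2 (M i) \<alpha> ((x(j:=b)) i))"
        using fS jS by (simp add: prod.remove)
      also have "(\<Prod>i\<in>S - {j}. app2 (M i) \<alpha> ((x(j:=b)) i)) = \<Pi>" unfolding \<Pi>_def
        by (rule prod.cong) auto
      finally have p: "(\<Prod>i\<in>S. app2 (M i) \<alpha> ((x(j:=b)) i)) = app2 (M j) \<alpha> b * \<Pi>" .
      have "\<gamma> (x(j:=b)) = \<gamma> y"
        using dg jS unfolding dep_def x_def pickx_def by auto
      then show ?thesis unfolding Tt_def p by simp
    qed
    have "contr j v (Tt \<gamma> M S \<alpha>) x = \<gamma> y * \<Pi> * (v True * app2 (M j) \<alpha> True + v False * app2 (M j) \<alpha> False)"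
      unfolding contr_def T by (simp add: algebra_simps)
    then show ?thesis using c v0 \<Pi>nz y unfolding \<alpha>_def by simp
  qed
  let ?M = "M j"
  have r1: "?M True False = 0" using rel[OF e1_nz] by (simp add: app2_def Jf_def)
  have r2: "?M False True = 0" using rel[OF e0_nz] by (simp add: app2_def Jf_def)
  have r3: "?M True True = ?M False False" using rel[OF one_nz] r1 r2 by (simp add: app2_def Jf_def)
  have app: "app2 ?M \<alpha> = (\<lambda>b. ?M True True * \<alpha> b)" for \<alpha>
  proof
    fix b show "app2 ?M \<alpha> b = ?M True True * \<alpha> b" using r1 r2 r3 by (cases b) (simp_all add: app2_def)
  qed
  have "?M True True \<noteq> 0"
  proof
    assume "?M True True = 0"
    then have "app2 ?M (\<lambda>b. if b then 1 else 0) = (\<lambda>_. 0)" using app by simp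
    then show False using inv_nz[OF _ e1_nz] inv jS by blast
  qed
  then show ?thesis unfolding proj_identity_def using app by blast
qed

lemma hom_prod:
  assumes "finite S" "\<forall>r\<in>S. degree (f r) \<le> 1" "degree g = 0"
  shows "hom (card S) ((\<Prod>r\<in>S. f r) * g) v = (\<Prod>r\<in>S. hom 1 (f r) v) * coeff g 0"
  using assms
proof (induction S rule: finite_induct)
  case empty then show ?case by (simp add: hom_const0)
next
  case (insert a A)
  have dA: "degree ((\<Prod>r\<in>A. f r) * g) \<le> card A"
  proof -
    have "degree ((\<Prod>r\<in>A. f r) * g) \<le> degree (\<Prod>r\<in>A. f r) + degree g" by (rule degree_mult_le)
    also have "degree (\<Prod>r\<in>A. f r) \<le> (\<Sum>r\<in>A. degree (f r))"
      using degree_prod_sum_le[OF insert.hyps(1), of f] by (simp add: o_def)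
    also have "\<dots> \<le> (\<Sum>r\<in>A. 1)" by (rule sum_mono) (use insert.prems in auto)
    finally show ?thesis using insert.prems by simp
  qed
  have "hom (1 + card A) (f a * ((\<Prod>r\<in>A. f r) * g)) v = hom 1 (f a) v * hom (card A) ((\<Prod>r\<in>A. f r) * g) v"
    by (rule hom_mult) (use insert.prems dA in auto)
  then show ?case using insert by (simp add: algebra_simps)
qed

lemma det_invertible:
  assumes "M True True * M False False - M True False * M False True \<noteq> 0"
  shows "invertible2 M"
proof -
  define dt where "dt = M True True * M False False - M True False * M False True"
  define N where "N = (\<lambda>b c. inverse dt * (if b then (if c then M False False else - M True False)
                            else (if c then - M False True else M True True)))"
  have "\<forall>\<alpha>. app2 N (app2 M \<alpha>) = \<alpha> \<and> app2 M (app2 N \<alpha>) = \<alpha>"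
  proof
    fix \<alpha> :: "bool \<Rightarrow> complex"
    have dt0: "dt \<noteq> 0" using assms unfolding dt_def .
    have e1: "app2 N (app2 M \<alpha>) True = \<alpha> True"
    proof -
      have "app2 N (app2 M \<alpha>) True = inverse dt * (dt * \<alpha> True)"
        unfolding N_def app2_def dt_def by (simp add: algebra_simps)
      then show ?thesis using dt0 by simp
    qed
    have e2: "app2 N (app2 M \<alpha>) False = \<alpha> False"
    proof -
      have "app2 N (app2 M \<alpha>) False = inverse dt * (dt * \<alpha> False)"
        unfolding N_def app2_def dt_def by (simp add: algebra_simps)
      then show ?thesis using dt0 by simp
    qed
    have e3: "app2 M (app2 N \<alpha>) True = \<alpha> True"
    proof -
      have "app2 M (app2 N \<alpha>) True = inverse dt * (dt * \<alpha> True)"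
        unfolding N_def app2_def dt_def by (simp add: algebra_simps)
      then show ?thesis using dt0 by simp
    qed
    have e4: "app2 M (app2 N \<alpha>) False = \<alpha> False"
    proof -
      have "app2 M (app2 N \<alpha>) False = inverse dt * (dt * \<alpha> False)"
        unfolding N_def app2_def dt_def by (simp add: algebra_simps)
      then show ?thesis using dt0 by simp
    qed
    have "app2 N (app2 M \<alpha>) b = \<alpha> b" for b using e1 e2 by (cases b) auto
    moreover have "app2 M (app2 N \<alpha>) b = \<alpha> b" for b using e3 e4 by (cases b) auto
    ultimately show "app2 N (app2 M \<alpha>) = \<alpha> \<and> app2 M (app2 N \<alpha>) = \<alpha>" by auto
  qed
  then show ?thesis unfolding invertible2_def by blast
qed



context
  fixes m j :: nat and \<phi> :: "(nat \<Rightarrow> complex) \<Rightarrow> ((nat \<Rightarrow> bool) \<Rightarrow> complex)"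
    and e :: "nat \<Rightarrow> nat" and F :: "nat \<Rightarrow> nat \<Rightarrow> nat \<Rightarrow> complex"
  assumes fs: "factorization_structure m \<phi>" and jm: "j \<in> {1..m}"
    and fc: "\<forall>i\<in>{1..m}. fcurve m \<phi> i (e i) (F i)"
begin

lemma fci: "i \<in> {1..m} \<Longrightarrow> fcurve m \<phi> i (e i) (F i)" using fc by blast

lemma psi_scale:
  assumes a: "a \<in> {1..m}" and u: "u \<noteq> (\<lambda>_. 0)"
    and eq: "cline (psi_of m (e a) (F a) u) = cline (psi_of m (e b) (F b) v)"
  shows "\<exists>c. c \<noteq> 0 \<and> \<phi> (psi_of m (e a) (F a) u) = (\<lambda>t. c * \<phi> (psi_of m (e b) (F b) v) t)"
proof -
  obtain c where c: "psi_of m (e a) (F a) u = (\<lambda>i. c * psi_of m (e b) (F b) v i)"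
    using cline_eq_scale[OF eq] by blast
  have "c \<noteq> 0"
  proof
    assume "c = 0"
    then have "psi_of m (e a) (F a) u = (\<lambda>_. 0)" using c by simp
    then show False using psi_nz[OF fs fci[OF a] u] by simp
  qed
  moreover have "\<phi> (psi_of m (e a) (F a) u) = (\<lambda>t. c * \<phi> (psi_of m (e b) (F b) v) t)"
    unfolding c by (rule phi_scal[OF fs psi_in[OF fs]])
  ultimately show ?thesis by blast
qed

lemma img_elim:
  assumes "X \<in> curve_image m ee FF"
  obtains v where "v \<noteq> (\<lambda>_. 0)" "X = cline (psi_of m ee FF v)"
  using assms unfolding curve_image_def by blast

lemma img_intro: "v \<noteq> (\<lambda>_. 0) \<Longrightarrow> cline (psi_of m ee FF v) \<in> curve_image m ee FF"
  unfolding curve_image_def by blast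

lemma W_dep: "dep {1..m} (\<phi> (psi_of m ee FF v))"
  by (rule tensor_space_dep[OF phi_ts[OF fs psi_in[OF fs]]])

context
  fixes S M \<gamma>
  assumes dd: "decomposition_data m \<phi> e F j S M \<gamma>"
begin

lemma dd_S: "S \<subseteq> {1..m}" "card S = e j" "\<gamma> \<noteq> (\<lambda>_. 0)" "\<gamma> \<in> tensor_space ({1..m} - S)"
    "\<forall>r\<in>S. invertible2 (M r)"
  using dd unfolding decomposition_data_def by blast+

lemma fS: "finite S" using dd_S(1) finite_subset by blast

lemma dg: "dep ({1..m} - S) \<gamma>" using tensor_space_dep[OF dd_S(4)] .

lemma Wj_Tt:
  assumes v: "v \<noteq> (\<lambda>_. 0)"
  shows "\<exists>c. c \<noteq> 0 \<and> \<phi> (psi_of m (e j) (F j) v) = (\<lambda>x. c * Tt \<gamma> M S (Jf v) x)"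
proof -
  have "cline (\<phi> (psi_of m (e j) (F j) v)) = cline (Tt \<gamma> M S (Jf v))"
    using dd v Jf_nz[OF v] Jf_ann[of v] unfolding decomposition_data_def Tt_def by blast
  then obtain c where c: "\<phi> (psi_of m (e j) (F j) v) = (\<lambda>x. c * Tt \<gamma> M S (Jf v) x)"
    using cline_eq_scale by blast
  have "c \<noteq> 0"
  proof
    assume "c = 0"
    then have "\<phi> (psi_of m (e j) (F j) v) = (\<lambda>_. 0)" using c by simp
    then show False using W_nz[OF fs fci[OF jm] v] by simp
  qed
  then show ?thesis using c by blast
qed

lemma Tt_contr_j: "v \<noteq> (\<lambda>_. 0) \<Longrightarrow> contr j v (Tt \<gamma> M S (Jf v)) x = 0"
proof -
  assume v: "v \<noteq> (\<lambda>_. 0)"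
  obtain c where c: "c \<noteq> 0" "\<phi> (psi_of m (e j) (F j) v) = (\<lambda>x. c * Tt \<gamma> M S (Jf v) x)"
    using Wj_Tt[OF v] by blast
  have "0 = contr j v (\<phi> (psi_of m (e j) (F j) v)) x" using W_contr[OF fs fci[OF jm] jm] by simp
  also have "\<dots> = c * contr j v (Tt \<gamma> M S (Jf v)) x" unfolding c(2) contr_def by (simp add: algebra_simps)
  finally show ?thesis using c(1) by simp
qed

lemma in_S_crit:
  assumes r: "r \<in> {1..m}"
    and h: "\<forall>u. u \<noteq> (\<lambda>_. 0) \<longrightarrow> (\<exists>v. v \<noteq> (\<lambda>_. 0) \<and> (\<forall>x. contr r u (Tt \<gamma> M S (Jf v)) x = 0))"
  shows "r \<in> S"
proof (rule ccontr)
  assume rS: "r \<notin> S"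
  have "\<gamma> = (\<lambda>_. 0)"
  proof (rule key_notin[OF fS rS dg dd_S(5)])
    obtain v where "v \<noteq> (\<lambda>_. 0)" "\<forall>x. contr r (\<lambda>b. if b then 1 else 0) (Tt \<gamma> M S (Jf v)) x = 0"
      using h e1_nz by blast
    then show "\<exists>\<alpha>. \<alpha> \<noteq> (\<lambda>_. 0) \<and> (\<forall>x. contr r (\<lambda>b. if b then 1 else 0) (Tt \<gamma> M S \<alpha>) x = 0)"
      using Jf_nz by blast
    obtain v where "v \<noteq> (\<lambda>_. 0)" "\<forall>x. contr r (\<lambda>b. if b then 0 else 1) (Tt \<gamma> M S (Jf v)) x = 0"
      using h e0_nz by blast
    then show "\<exists>\<alpha>. \<alpha> \<noteq> (\<lambda>_. 0) \<and> (\<forall>x. contr r (\<lambda>b. if b then 0 else 1) (Tt \<gamma> M S \<alpha>) x = 0)"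
      using Jf_nz by blast
  qed
  then show False using dd_S(3) by simp
qed

lemma j_in_S: "j \<in> S"
  by (rule in_S_crit[OF jm]) (use Tt_contr_j in blast)

lemma proj_j: "proj_identity (M j)"
  by (rule proj_lemma[OF fS j_in_S dg dd_S(3,5)]) (use Tt_contr_j in blast)

lemma same_img_in_S:
  assumes r: "r \<in> {1..m}" and img: "curve_image m (e r) (F r) = curve_image m (e j) (F j)"
  shows "r \<in> S"
proof (rule in_S_crit[OF r], intro allI impI)
  fix u :: "bool \<Rightarrow> complex" assume u: "u \<noteq> (\<lambda>_. 0)"
  have "cline (psi_of m (e r) (F r) u) \<in> curve_image m (e j) (F j)" using img img_intro[OF u, of "e r" "F r"] by simp
  then obtain v where v: "v \<noteq> (\<lambda>_. 0)" "cline (psi_of m (e r) (F r) u) = cline (psi_of m (e j) (F j) v)"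
    by (rule img_elim)
  obtain c1 where c1: "c1 \<noteq> 0" "\<phi> (psi_of m (e r) (F r) u) = (\<lambda>t. c1 * \<phi> (psi_of m (e j) (F j) v) t)"
    using psi_scale[OF r u v(2)] by blast
  obtain c2 where c2: "c2 \<noteq> 0" "\<phi> (psi_of m (e j) (F j) v) = (\<lambda>x. c2 * Tt \<gamma> M S (Jf v) x)"
    using Wj_Tt[OF v(1)] by blast
  have "\<forall>x. contr r u (Tt \<gamma> M S (Jf v)) x = 0"
  proof
    fix x
    have "0 = contr r u (\<phi> (psi_of m (e r) (F r) u)) x" using W_contr[OF fs fci[OF r] r] by simp
    also have "\<dots> = c1 * (c2 * contr r u (Tt \<gamma> M S (Jf v)) x)" unfolding c1(2) c2(2) contr_def by (simp add: algebra_simps)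
    finally show "contr r u (Tt \<gamma> M S (Jf v)) x = 0" using c1(1) c2(1) by simp
  qed
  then show "\<exists>v. v \<noteq> (\<lambda>_. 0) \<and> (\<forall>x. contr r u (Tt \<gamma> M S (Jf v)) x = 0)" using v(1) by blast
qed


lemma Tt_contr_S:
  assumes rS: "r \<in> S"
  shows "contr r (Jf (app2 (M r) \<alpha>)) (Tt \<gamma> M S \<alpha>) x = 0"
proof -
  define \<beta> where "\<beta> = app2 (M r) \<alpha>"
  define \<Pi> where "\<Pi> = (\<Prod>i\<in>S - {r}. app2 (M i) \<alpha> (x i))"
  have T: "Tt \<gamma> M S \<alpha> (x(r:=b)) = \<gamma> x * (\<beta> b * \<Pi>)" for b
  proof -
    have "(\<Prod>i\<in>S. app2 (M i) \<alpha> ((x(r:=b)) i)) = \<beta> b * (\<Prod>i\<in>S - {r}. app2 (M i) \<alpha> ((x(r:=b)) i))"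
      using fS rS unfolding \<beta>_def by (simp add: prod.remove)
    also have "(\<Prod>i\<in>S - {r}. app2 (M i) \<alpha> ((x(r:=b)) i)) = \<Pi>" unfolding \<Pi>_def
      by (rule prod.cong) auto
    finally have p: "(\<Prod>i\<in>S. app2 (M i) \<alpha> ((x(r:=b)) i)) = \<beta> b * \<Pi>" .
    have "\<gamma> (x(r:=b)) = \<gamma> x" using dg rS unfolding dep_def by auto
    then show ?thesis unfolding Tt_def p by simp
  qed
  show ?thesis unfolding contr_def T \<beta>_def[symmetric] by (simp add: Jf_def algebra_simps)
qed

lemma Wj_Sigma:
  assumes rS: "r \<in> S" and v: "v \<noteq> (\<lambda>_. 0)"
  shows "\<phi> (psi_of m (e j) (F j) v) \<in> Sigma0 m r (uu (M r) v)"
proof (rule contr_Sigma0[OF _ W_dep])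
  show "r \<in> {1..m}" using rS dd_S(1) by blast
  obtain c where c: "c \<noteq> 0" "\<phi> (psi_of m (e j) (F j) v) = (\<lambda>x. c * Tt \<gamma> M S (Jf v) x)"
    using Wj_Tt[OF v] by blast
  show "\<forall>x. contr r (uu (M r) v) (\<phi> (psi_of m (e j) (F j) v)) x = 0"
  proof
    fix x
    have "contr r (uu (M r) v) (\<phi> (psi_of m (e j) (F j) v)) x = c * contr r (uu (M r) v) (Tt \<gamma> M S (Jf v)) x"
      unfolding c(2) contr_def by (simp add: algebra_simps)
    also have "\<dots> = 0" unfolding uu_def using Tt_contr_S[OF rS] by simp
    finally show "contr r (uu (M r) v) (\<phi> (psi_of m (e j) (F j) v)) x = 0" .
  qed
qed

lemma uu_zero: "uu M0 (\<lambda>_. 0) = (\<lambda>_. 0)"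
  by (simp add: uu_def Jf_def app2_def fun_eq_iff)

lemma same_img:
  assumes rS: "r \<in> S"
  shows "curve_image m (e r) (F r) = curve_image m (e j) (F j)"
proof -
  have r: "r \<in> {1..m}" using rS dd_S(1) by blast
  have inv: "invertible2 (M r)" using rS dd_S(5) by blast
  obtain U where U: "zariski_open_P1 U" "U \<noteq> {}"
    "\<forall>u\<in>U. {x \<in> hspace m. \<phi> x \<in> Sigma0 m r u} = cline (psi_of m (e r) (F r) u)"
    using fci[OF r] unfolding fcurve_def generic_P1_def by blast
  obtain N' F0 where F0: "F0 \<noteq> 0" "degree F0 \<le> N'"
      "\<forall>u. u \<noteq> (\<lambda>_. 0) \<longrightarrow> hom N' F0 u \<noteq> 0 \<longrightarrow> u \<in> U"
    using zariski_witness[OF U(1,2)] by blast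
  define Am where "Am = mmul J0 (mmul (M r) J0)"
  have uuA: "uu (M r) v = app2 Am v" for v unfolding Am_def by (rule uu_lin)
  obtain F1 where F1: "degree F1 \<le> N'" "\<forall>v. hom N' F0 (app2 Am v) = hom N' F1 v"
    using compose_form[OF F0(2)] by blast
  have F1nz: "F1 \<noteq> 0"
  proof
    assume F10: "F1 = 0"
    obtain u0 where u0: "hom N' F0 u0 \<noteq> 0" using hom_eq0_iff[OF F0(2)] F0(1) by blast
    obtain v0 where v0: "uu (M r) v0 = u0" using uu_surj[OF inv] by blast
    have "hom N' F1 v0 = hom N' F0 u0" using F1(2) v0 uuA by metis
    then show False using u0 F10 by simp
  qed
  have good: "\<exists>c. psi_of m (e j) (F j) v = (\<lambda>i. c * psi_of m (e r) (F r) (uu (M r) v) i)"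
    if v: "v \<noteq> (\<lambda>_. 0)" and hv: "hom N' F1 v \<noteq> 0" for v
  proof -
    have "uu (M r) v \<noteq> (\<lambda>_. 0)" by (rule uu_nz[OF inv v])
    moreover have "hom N' F0 (uu (M r) v) \<noteq> 0" using hv F1(2) uuA by metis
    ultimately have "uu (M r) v \<in> U" using F0(3) by blast
    moreover have "psi_of m (e j) (F j) v \<in> {x \<in> hspace m. \<phi> x \<in> Sigma0 m r (uu (M r) v)}"
      using psi_in[OF fs] Wj_Sigma[OF rS v] by blast
    ultimately have "psi_of m (e j) (F j) v \<in> cline (psi_of m (e r) (F r) (uu (M r) v))" using U(3) by blast
    then show ?thesis unfolding cline_def by blast
  qed
  have minors: "psi_of m (e j) (F j) v i * psi_of m (e r) (F r) (uu (M r) v) k =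
                psi_of m (e j) (F j) v k * psi_of m (e r) (F r) (uu (M r) v) i" for v i k
  proof (cases "i \<le> m \<and> k \<le> m")
    case False
    then show ?thesis by (auto simp: psi_of_def)
  next
    case True
    obtain Qi where Qi: "degree Qi \<le> e r" "\<forall>v. hom (e r) (Pc (e r) (F r i)) (app2 Am v) = hom (e r) Qi v"
      using compose_form[OF degree_Pc] by blast
    obtain Qk where Qk: "degree Qk \<le> e r" "\<forall>v. hom (e r) (Pc (e r) (F r k)) (app2 Am v) = hom (e r) Qk v"
      using compose_form[OF degree_Pc] by blast
    define G where "G = Pc (e j) (F j i) * Qk - Pc (e j) (F j k) * Qi"
    have dG: "degree G \<le> e j + e r" unfolding G_def
    proof (rule degree_diff_le)
      show "degree (Pc (e j) (F j i) * Qk) \<le> e j + e r"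
        using degree_mult_le[of "Pc (e j) (F j i)" Qk] degree_Pc[of "e j" "F j i"] Qk(1) by linarith
      show "degree (Pc (e j) (F j k) * Qi) \<le> e j + e r"
        using degree_mult_le[of "Pc (e j) (F j k)" Qi] degree_Pc[of "e j" "F j k"] Qi(1) by linarith
    qed
    have homG: "hom (e j + e r) G w = psi_of m (e j) (F j) w i * psi_of m (e r) (F r) (uu (M r) w) k -
                psi_of m (e j) (F j) w k * psi_of m (e r) (F r) (uu (M r) w) i" for w
    proof -
      have "hom (e j + e r) G w = hom (e j) (Pc (e j) (F j i)) w * hom (e r) Qk w -
              hom (e j) (Pc (e j) (F j k)) w * hom (e r) Qi w"
        unfolding G_def hom_diff by (simp add: hom_mult degree_Pc Qi(1) Qk(1))
      also have "\<dots> = bform (e j) (F j i) w * bform (e r) (F r k) (uu (M r) w) -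
              bform (e j) (F j k) w * bform (e r) (F r i) (uu (M r) w)"
        using Qi(2) Qk(2) uuA by (simp add: hom_Pc)
      finally show ?thesis using True by (simp add: psi_of_def)
    qed
    have "G = 0"
    proof (rule vanish_basic[OF dG F1(1) F1nz])
      fix w :: "bool \<Rightarrow> complex" assume w: "w \<noteq> (\<lambda>_. 0)" "hom N' F1 w \<noteq> 0"
      obtain c where c: "psi_of m (e j) (F j) w = (\<lambda>i. c * psi_of m (e r) (F r) (uu (M r) w) i)"
        using good[OF w] by blast
      show "hom (e j + e r) G w = 0" unfolding homG c by (simp add: algebra_simps)
    qed
    then show ?thesis using homG[of v] by simp
  qed
  have cl: "cline (psi_of m (e j) (F j) v) = cline (psi_of m (e r) (F r) (uu (M r) v))"
    if v: "v \<noteq> (\<lambda>_. 0)" for v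
    by (rule cline_prop[OF psi_nz[OF fs fci[OF r] uu_nz[OF inv v]] psi_nz[OF fs fci[OF jm] v]])
       (use minors in blast)
  show ?thesis
  proof
    show "curve_image m (e r) (F r) \<subseteq> curve_image m (e j) (F j)"
    proof
      fix X assume "X \<in> curve_image m (e r) (F r)"
      then obtain u where u: "u \<noteq> (\<lambda>_. 0)" "X = cline (psi_of m (e r) (F r) u)" by (rule img_elim)
      obtain v0 where v0: "uu (M r) v0 = u" using uu_surj[OF inv] by blast
      have v0nz: "v0 \<noteq> (\<lambda>_. 0)"
      proof
        assume "v0 = (\<lambda>_. 0)" then have "u = (\<lambda>_. 0)" using v0 uu_zero by metis
        then show False using u(1) by simp
      qed
      have "X = cline (psi_of m (e j) (F j) v0)" using cl[OF v0nz] v0 u(2) by simp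
      then show "X \<in> curve_image m (e j) (F j)" using img_intro[OF v0nz] by simp
    qed
    show "curve_image m (e j) (F j) \<subseteq> curve_image m (e r) (F r)"
    proof
      fix X assume "X \<in> curve_image m (e j) (F j)"
      then obtain v where v: "v \<noteq> (\<lambda>_. 0)" "X = cline (psi_of m (e j) (F j) v)" by (rule img_elim)
      have "X = cline (psi_of m (e r) (F r) (uu (M r) v))" using cl[OF v(1)] v(2) by simp
      then show "X \<in> curve_image m (e r) (F r)" using img_intro[OF uu_nz[OF inv v(1)]] by simp
    qed
  qed
qed

lemma dd_decomposable: "decomposable m e F j"
proof -
  have "{i \<in> {1..m}. curve_image m (e i) (F i) = curve_image m (e j) (F j)} = S"
    using same_img_in_S same_img dd_S(1) by blast
  then show ?thesis unfolding decomposable_def using dd_S(2) by simp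
qed

end


lemma forward:
  assumes dec: "decomposable m e F j"
  shows "\<exists>S M \<gamma>. decomposition_data m \<phi> e F j S M \<gamma>"
proof -
  define S where "S = {i \<in> {1..m}. curve_image m (e i) (F i) = curve_image m (e j) (F j)}"
  have cS: "card S = e j" using dec unfolding decomposable_def S_def .
  have Ssub: "S \<subseteq> {1..m}" unfolding S_def by blast
  have fS: "finite S" using Ssub finite_subset by blast
  obtain P where P: "\<forall>x. degree (P x) \<le> e j" "\<forall>x y. (\<forall>k\<in>{1..m}. x k = y k) \<longrightarrow> P x = P y"
      "\<forall>v x. \<phi> (psi_of m (e j) (F j) v) x = hom (e j) (P x) v"
    using W_poly[OF fs] by blast
  have contrP: "contr r u (\<phi> (psi_of m (e j) (F j) v)) x =
      u True * hom (e j) (P (x(r:=True))) v + u False * hom (e j) (P (x(r:=False))) v" for r u v x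
    by (simp add: contr_def P(3))
  have nz: "\<forall>v. v \<noteq> (\<lambda>_. 0) \<longrightarrow> (\<exists>x. hom (e j) (P x) v \<noteq> 0)"
  proof (intro allI impI)
    fix v :: "bool \<Rightarrow> complex" assume v: "v \<noteq> (\<lambda>_. 0)"
    have "\<phi> (psi_of m (e j) (F j) v) \<noteq> (\<lambda>_. 0)" by (rule W_nz[OF fs fci[OF jm] v])
    then obtain x where "\<phi> (psi_of m (e j) (F j) v) x \<noteq> 0" by auto
    then show "\<exists>x. hom (e j) (P x) v \<noteq> 0" using P(3) by auto
  qed
  have C: "\<forall>r\<in>S. \<forall>v. v \<noteq> (\<lambda>_. 0) \<longrightarrow> (\<exists>u. u \<noteq> (\<lambda>_. 0) \<and>
      (\<forall>x. u True * hom (e j) (P (x(r:=True))) v + u False * hom (e j) (P (x(r:=False))) v = 0))"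
  proof (intro ballI allI impI)
    fix r and v :: "bool \<Rightarrow> complex" assume rS: "r \<in> S" and v: "v \<noteq> (\<lambda>_. 0)"
    have r: "r \<in> {1..m}" and img: "curve_image m (e r) (F r) = curve_image m (e j) (F j)"
      using rS unfolding S_def by auto
    have "cline (psi_of m (e j) (F j) v) \<in> curve_image m (e r) (F r)" using img img_intro[OF v] by simp
    then obtain u where u: "u \<noteq> (\<lambda>_. 0)" "cline (psi_of m (e j) (F j) v) = cline (psi_of m (e r) (F r) u)"
      by (rule img_elim)
    obtain c where c: "c \<noteq> 0" "\<phi> (psi_of m (e j) (F j) v) = (\<lambda>t. c * \<phi> (psi_of m (e r) (F r) u) t)"
      using psi_scale[OF jm v u(2)] by blast
    have "\<forall>x. contr r u (\<phi> (psi_of m (e j) (F j) v)) x = 0"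
    proof
      fix x
      have "contr r u (\<phi> (psi_of m (e j) (F j) v)) x = c * contr r u (\<phi> (psi_of m (e r) (F r) u)) x"
        unfolding c(2) contr_def by (simp add: algebra_simps)
      then show "contr r u (\<phi> (psi_of m (e j) (F j) v)) x = 0" using W_contr[OF fs fci[OF r] r] by simp
    qed
    then show "\<exists>u. u \<noteq> (\<lambda>_. 0) \<and>
      (\<forall>x. u True * hom (e j) (P (x(r:=True))) v + u False * hom (e j) (P (x(r:=False))) v = 0)"
      using u(1) unfolding contrP by blast
  qed
  have D: "\<forall>r\<in>S. \<forall>u. u \<noteq> (\<lambda>_. 0) \<longrightarrow> (\<exists>v. v \<noteq> (\<lambda>_. 0) \<and>
      (\<forall>x. u True * hom (e j) (P (x(r:=True))) v + u False * hom (e j) (P (x(r:=False))) v = 0))"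
  proof (intro ballI allI impI)
    fix r and u :: "bool \<Rightarrow> complex" assume rS: "r \<in> S" and u: "u \<noteq> (\<lambda>_. 0)"
    have r: "r \<in> {1..m}" and img: "curve_image m (e r) (F r) = curve_image m (e j) (F j)"
      using rS unfolding S_def by auto
    have "cline (psi_of m (e r) (F r) u) \<in> curve_image m (e j) (F j)" using img img_intro[OF u, of "e r" "F r"] by simp
    then obtain v where v: "v \<noteq> (\<lambda>_. 0)" "cline (psi_of m (e r) (F r) u) = cline (psi_of m (e j) (F j) v)"
      by (rule img_elim)
    obtain c where c: "c \<noteq> 0" "\<phi> (psi_of m (e r) (F r) u) = (\<lambda>t. c * \<phi> (psi_of m (e j) (F j) v) t)"
      using psi_scale[OF r u v(2)] by blast
    have "\<forall>x. contr r u (\<phi> (psi_of m (e j) (F j) v)) x = 0"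
    proof
      fix x
      have "contr r u (\<phi> (psi_of m (e r) (F r) u)) x = c * contr r u (\<phi> (psi_of m (e j) (F j) v)) x"
        unfolding c(2) contr_def by (simp add: algebra_simps)
      then show "contr r u (\<phi> (psi_of m (e j) (F j) v)) x = 0" using W_contr[OF fs fci[OF r] r] c(1) by simp
    qed
    then show "\<exists>v. v \<noteq> (\<lambda>_. 0) \<and>
      (\<forall>x. u True * hom (e j) (P (x(r:=True))) v + u False * hom (e j) (P (x(r:=False))) v = 0)"
      using v(1) unfolding contrP by blast
  qed
  obtain L s where Ls: "\<forall>r\<in>S. \<forall>b. degree (L r b) \<le> 1"
     "\<forall>r\<in>S. coeff (L r True) 0 * coeff (L r False) 1 \<noteq> coeff (L r True) 1 * coeff (L r False) 0"
     "\<forall>x. degree (s x) = 0" "\<forall>x y. (\<forall>i\<in>{1..m} - S. x i = y i) \<longrightarrow> s x = s y"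
     "\<exists>x. s x \<noteq> 0" "\<forall>x. P x = (\<Prod>r\<in>S. L r (x r)) * s x"
    using core[OF fS cS P(1) P(2) nz C D] by (elim exE conjE) (rule that; (assumption | blast))
  define M where "M r b c = (if c then coeff (L r b) 0 else - coeff (L r b) 1)" for r b c
  define \<gamma> where "\<gamma> x = coeff (s x) 0" for x
  have g0: "\<gamma> \<noteq> (\<lambda>_. 0)"
  proof
    assume g: "\<gamma> = (\<lambda>_. 0)"
    obtain x where x: "s x \<noteq> 0" using Ls(5) by blast
    have "\<gamma> x = 0" using g by simp
    then have "coeff (s x) 0 = 0" unfolding \<gamma>_def .
    then have "s x = 0" using leading_coeff_0_iff[of "s x"] Ls(3) by simp
    then show False using x by simp
  qed
  have "dep ({1..m} - S) \<gamma>" unfolding dep_def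
  proof (intro allI impI)
    fix x y :: "nat \<Rightarrow> bool" assume "\<forall>i\<in>{1..m} - S. x i = y i"
    then have "s x = s y" using Ls(4) by blast
    then show "\<gamma> x = \<gamma> y" unfolding \<gamma>_def by simp
  qed
  then have gts: "\<gamma> \<in> tensor_space ({1..m} - S)"
    by (rule dep_tensor_space[OF finite_Diff[OF finite_atLeastAtMost]])
  have inv: "\<forall>r\<in>S. invertible2 (M r)"
  proof
    fix r assume "r \<in> S"
    then have "coeff (L r True) 0 * coeff (L r False) 1 \<noteq> coeff (L r True) 1 * coeff (L r False) 0" using Ls(2) by blast
    then show "invertible2 (M r)" by (intro det_invertible) (simp add: M_def algebra_simps)
  qed
  have main: "cline (\<phi> (psi_of m (e j) (F j) v)) = cline (\<lambda>x. \<gamma> x * (\<Prod>r\<in>S. app2 (M r) \<alpha> (x r)))"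
    if v: "v \<noteq> (\<lambda>_. 0)" and a0: "\<alpha> \<noteq> (\<lambda>_. 0)" and aa: "\<alpha> \<in> ann v" for v \<alpha>
  proof -
    obtain c where c: "c \<noteq> 0" "\<alpha> = (\<lambda>b. c * Jf v b)" using ann_scal[OF v aa a0] by blast
    have app: "app2 (M r) \<alpha> b = c * hom 1 (L r b) v" for r b
      unfolding c(2) app2_def M_def Jf_def hom_lin by (simp add: algebra_simps)
    have W: "\<phi> (psi_of m (e j) (F j) v) x = (\<Prod>r\<in>S. hom 1 (L r (x r)) v) * \<gamma> x" for x
    proof -
      have "\<phi> (psi_of m (e j) (F j) v) x = hom (card S) ((\<Prod>r\<in>S. L r (x r)) * s x) v"
        using P(3) Ls(6) cS by simp
      also have "\<dots> = (\<Prod>r\<in>S. hom 1 (L r (x r)) v) * \<gamma> x"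
        unfolding \<gamma>_def by (rule hom_prod[OF fS]) (use Ls(1,3) in auto)
      finally show ?thesis .
    qed
    have "(\<lambda>x. \<gamma> x * (\<Prod>r\<in>S. app2 (M r) \<alpha> (x r))) = (\<lambda>x. c ^ card S * \<phi> (psi_of m (e j) (F j) v) x)"
    proof
      fix x
      have "(\<Prod>r\<in>S. app2 (M r) \<alpha> (x r)) = (\<Prod>r\<in>S. c * hom 1 (L r (x r)) v)" unfolding app ..
      also have "\<dots> = c ^ card S * (\<Prod>r\<in>S. hom 1 (L r (x r)) v)" by (simp add: prod.distrib)
      finally show "\<gamma> x * (\<Prod>r\<in>S. app2 (M r) \<alpha> (x r)) = c ^ card S * \<phi> (psi_of m (e j) (F j) v) x"
        unfolding W by (simp add: algebra_simps)
    qed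
    then have "cline (\<lambda>x. \<gamma> x * (\<Prod>r\<in>S. app2 (M r) \<alpha> (x r))) =
        cline (\<lambda>x. c ^ card S * \<phi> (psi_of m (e j) (F j) v) x)" by simp
    also have "\<dots> = cline (\<phi> (psi_of m (e j) (F j) v))" by (rule cline_scale) (use c(1) in simp)
    finally show ?thesis by simp
  qed
  have dd: "decomposition_data m \<phi> e F j S M \<gamma>"
    unfolding decomposition_data_def
    by (intro conjI Ssub cS g0 gts inv allI impI main)
  show ?thesis by (rule exI[where x=S], rule exI[where x=M], rule exI[where x=\<gamma>], rule dd)
qed

end

lemma theorem2p13_dev:
  fixes m j :: nat
    and \<phi> :: "(nat \<Rightarrow> complex) \<Rightarrow> ((nat \<Rightarrow> bool) \<Rightarrow> complex)"
    and e :: "nat \<Rightarrow> nat"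
    and F :: "nat \<Rightarrow> nat \<Rightarrow> nat \<Rightarrow> complex"
  assumes "factorization_structure m \<phi>"
    and "j \<in> {1..m}"
    and "\<forall>i\<in>{1..m}. fcurve m \<phi> i (e i) (F i)"
  shows "(decomposable m e F j \<longleftrightarrow> (\<exists>S M \<gamma>. decomposition_data m \<phi> e F j S M \<gamma>)) \<and>
         (\<forall>S M \<gamma>. decomposition_data m \<phi> e F j S M \<gamma> \<longrightarrow> j \<in> S \<and> proj_identity (M j))"
  using forward[OF assms] dd_decomposable[OF assms] j_in_S[OF assms] proj_j[OF assms] by blast


theorem theorem2p13:
  fixes m j :: nat
    and \<phi> :: "(nat \<Rightarrow> complex) \<Rightarrow> ((nat \<Rightarrow> bool) \<Rightarrow> complex)"
    and e :: "nat \<Rightarrow> nat"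
    and F :: "nat \<Rightarrow> nat \<Rightarrow> nat \<Rightarrow> complex"
  assumes "factorization_structure m \<phi>"
    and "j \<in> {1..m}"
    and "\<forall>i\<in>{1..m}. fcurve m \<phi> i (e i) (F i)"
  shows "(decomposable m e F j \<longleftrightarrow> (\<exists>S M \<gamma>. decomposition_data m \<phi> e F j S M \<gamma>)) \<and>
         (\<forall>S M \<gamma>. decomposition_data m \<phi> e F j S M \<gamma> \<longrightarrow> j \<in> S \<and> proj_identity (M j))"
  using theorem2p13_dev[OF assms] .

end
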